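(* Let $\nu$ be an instance with $\mu_1\ge\dots\ge\mu_L$, $\mu_1>\mu_L$, fix $T$, $T_{\mathrm{FE}}>0$, $\alpha,\beta\in(0,1)$, and let $\bar\Delta:=\mathrm{Save}^*(\nu,T_{\mathrm{FE}})/T_{\mathrm{FE}}$. Let $\mathcal{L}_{\mathrm g}:=\{i\in[L]:\Delta_i<\bar\Delta-\frac{1-\alpha}{\alpha}\Delta_L\}$ and assume $\mathcal{L}_{\mathrm g}\neq\emptyset$. For $\xi_1>0$ let $\nu^{(1)}$ be the instance in which arms $i\in\mathcal{L}_{\mathrm g}$ have mean $\frac{\mu_1+\mu_L-\xi_1}{2}$ and all other arms have mean $\frac{\mu_1+\mu_L+\xi_1}{2}$, and assume $|\mathcal{L}_{\mathrm g}|\ln T/D_{\mathrm{kl}}(\nu^{(1)}_{\mathrm{low}},\nu^{(1)}_{\mathrm{high}})>T_{\mathrm{FE}}$, where $\nu^{(1)}_{\mathrm{low}},\nu^{(1)}_{\mathrm{high}}$ are the two distributions used in $\nu^{(1)}$ (lower and higher mean). If $\pi$ is $(\alpha,\beta)$-probably saving on $\{\nu,\nu^{(1)}\}$, then $$T_{\mathrm{FE}}\ge\frac{\beta\ln T}{\max_{i\in[L]}D_{\mathrm{kl}}(\nu_i,\nu^{(1)}_i)}.$$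
   Context: All arm distributions belong to a fixed single-parameter exponential family on $[0,1]$ parametrized by the mean; $\Delta_i=\mu_1-\mu_i$. A policy picks arm $i_t$ at each round based on the past; $T_{i,t}$ is the number of pulls of arm $i$ in rounds $1..t$. For any instance $\nu'$ with best arm $i^*$ and gaps $\Delta'_i=\mu'_{i^*}-\mu'_i$, let $c'_i=\ln T/D_{\mathrm{kl}}(\nu'_i,\nu'_{i^*})$ ($+\infty$ if the divergence is $0$); $\widehat{\mathrm{Save}}(\pi;\nu',T_{\mathrm{FE}})=\sum_{i:\Delta'_i>0}\Delta'_i\min\{T_{i,T_{\mathrm{FE}}},c'_i\}$; after relabeling arms in nonincreasing order of means, $i_{\mathrm{FE}}=\max\{j:\sum_{i\ge j}c'_i\ge T_{\mathrm{FE}}\}$ and $\mathrm{Save}^*(\nu',T_{\mathrm{FE}})=\Delta'_{i_{\mathrm{FE}}}(T_{\mathrm{FE}}-\sum_{i>i_{\mathrm{FE}}}c'_i)+\sum_{i>i_{\mathrm{FE}}}\Delta'_ic'_i$. A policy $\pi$ is $(\alpha,\beta)$-probably saving on a set $S$ of instances (at horizon $T$ with budget $T_{\mathrm{FE}}$) if for every $\nu'\in S$, $\mathbb{P}_{\nu'}\big(\widehat{\mathrm{Save}}(\pi;\nu',T_{\mathrm{FE}})\ge\alpha\,\mathrm{Save}^*(\nu',T_{\mathrm{FE}})\big)\ge1-T^{-\beta}/2.4$. *)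

theory Defs
  imports "HOL-Probability.Probability"
begin

text \<open>Kullback-Leibler divergence D_kl(P,Q) = int log(dP/dQ) dP (natural log).
  Note the library's KL_divergence b M N is the divergence of N from M, hence the swap.\<close>
definition Dkl :: "real measure \<Rightarrow> real measure \<Rightarrow> real" where
  "Dkl P Q = KL_divergence (exp 1) Q P"

definition sp_exp_family :: "(real \<Rightarrow> real measure) \<Rightarrow> real set \<Rightarrow> bool" where
  "sp_exp_family D I \<longleftrightarrow>
     (\<exists>\<rho> \<theta> A. sets \<rho> = sets borel \<and> emeasure \<rho> (- {0..1}) = 0 \<and> inj_on \<theta> I \<and>
        (\<forall>m\<in>I. D m = density \<rho> (\<lambda>x. ennreal (exp (\<theta> m * x - A m))) \<and>
                prob_space (D m) \<and> integrable (D m) (\<lambda>x. x) \<and> (\<integral>x. x \<partial>D m) = m))"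

text \<open>A policy: at round t+1 (t = 0,1,...) it chooses an arm from its internal random seed u,
  the arms played in rounds 1..t and the rewards observed in rounds 1..t
  (entries at positions \<ge> t are masked to 0, so only the past is visible).\<close>
type_synonym policy = "nat \<Rightarrow> real \<times> (nat \<Rightarrow> nat) \<times> (nat \<Rightarrow> real) \<Rightarrow> nat"

text \<open>Reward table Y (s, i): reward of arm i if it is played at round s+1.\<close>
primrec arm_hist :: "policy \<Rightarrow> real \<Rightarrow> (nat \<times> nat \<Rightarrow> real) \<Rightarrow> nat \<Rightarrow> nat list" where
  "arm_hist \<pi> u Y 0 = []"
| "arm_hist \<pi> u Y (Suc t) =
     (let h = arm_hist \<pi> u Y t in
      h @ [\<pi> t (u, (\<lambda>s. if s < t then h ! s else 0), (\<lambda>s. if s < t then Y (s, h ! s) else 0))])"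

definition pulls :: "policy \<Rightarrow> real \<Rightarrow> (nat \<times> nat \<Rightarrow> real) \<Rightarrow> nat \<Rightarrow> nat \<Rightarrow> nat" where
  "pulls \<pi> u Y i t = length (filter (\<lambda>j. j = i) (arm_hist \<pi> u Y t))"

definition bandit_space :: "(real \<Rightarrow> real measure) \<Rightarrow> nat \<Rightarrow> (nat \<Rightarrow> real) \<Rightarrow> (real \<times> (nat \<times> nat \<Rightarrow> real)) measure" where
  "bandit_space D L \<mu> =
     uniform_measure lborel {0..1} \<Otimes>\<^sub>M (\<Pi>\<^sub>M si\<in>UNIV \<times> {1..L}. D (\<mu> (snd si)))"

text \<open>Policy measurability (needed for the events below to be events).\<close>
definition policy_measurable :: "policy \<Rightarrow> bool" where
  "policy_measurable \<pi> \<longleftrightarrow> (\<forall>t. \<pi> t \<in> measurable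
      (borel \<Otimes>\<^sub>M ((\<Pi>\<^sub>M s\<in>UNIV. count_space (UNIV::nat set)) \<Otimes>\<^sub>M (\<Pi>\<^sub>M s\<in>UNIV. (borel :: real measure))))
      (count_space UNIV))"

definition best_mean :: "nat \<Rightarrow> (nat \<Rightarrow> real) \<Rightarrow> real" where
  "best_mean L \<mu> = Max (\<mu> ` {1..L})"

definition cfac :: "(real \<Rightarrow> real measure) \<Rightarrow> nat \<Rightarrow> (nat \<Rightarrow> real) \<Rightarrow> nat \<Rightarrow> nat \<Rightarrow> ereal" where
  "cfac D L \<mu> T i =
     (let d = Dkl (D (\<mu> i)) (D (best_mean L \<mu>)) in if d = 0 then \<infinity> else ereal (ln (real T) / d))"

definition save_hat :: "(real \<Rightarrow> real measure) \<Rightarrow> nat \<Rightarrow> (nat \<Rightarrow> real) \<Rightarrow> nat \<Rightarrow> (nat \<Rightarrow> nat) \<Rightarrow> real" where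
  "save_hat D L \<mu> T n =
     (\<Sum>i\<in>{i\<in>{1..L}. best_mean L \<mu> - \<mu> i > 0}.
        (best_mean L \<mu> - \<mu> i) * real_of_ereal (min (ereal (real (n i))) (cfac D L \<mu> T i)))"

definition save_star_sorted :: "(real \<Rightarrow> real measure) \<Rightarrow> nat \<Rightarrow> (nat \<Rightarrow> real) \<Rightarrow> nat \<Rightarrow> nat \<Rightarrow> real" where
  "save_star_sorted D L \<mu> T TFE =
     (let c = cfac D L \<mu> T;
          \<Delta> = (\<lambda>i. best_mean L \<mu> - \<mu> i);
          iFE = Max {j\<in>{1..L}. (\<Sum>i\<in>{j..L}. c i) \<ge> ereal (real TFE)}
      in real_of_ereal (ereal (\<Delta> iFE) * (ereal (real TFE) - (\<Sum>i\<in>{iFE<..L}. c i))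
                        + (\<Sum>i\<in>{iFE<..L}. ereal (\<Delta> i) * c i)))"

definition sorting_perm :: "nat \<Rightarrow> (nat \<Rightarrow> real) \<Rightarrow> (nat \<Rightarrow> nat) \<Rightarrow> bool" where
  "sorting_perm L \<mu> \<sigma> \<longleftrightarrow> \<sigma> permutes {1..L} \<and>
     (\<forall>i j. 1 \<le> i \<longrightarrow> i \<le> j \<longrightarrow> j \<le> L \<longrightarrow> \<mu> (\<sigma> j) \<le> \<mu> (\<sigma> i))"

definition save_star :: "(real \<Rightarrow> real measure) \<Rightarrow> nat \<Rightarrow> (nat \<Rightarrow> real) \<Rightarrow> nat \<Rightarrow> nat \<Rightarrow> real" where
  "save_star D L \<mu> T TFE = save_star_sorted D L (\<mu> \<circ> (SOME \<sigma>. sorting_perm L \<mu> \<sigma>)) T TFE"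

definition probably_saving ::
  "(real \<Rightarrow> real measure) \<Rightarrow> nat \<Rightarrow> policy \<Rightarrow> real \<Rightarrow> real \<Rightarrow> nat \<Rightarrow> nat \<Rightarrow> (nat \<Rightarrow> real) set \<Rightarrow> bool" where
  "probably_saving D L \<pi> \<alpha> \<beta> T TFE S \<longleftrightarrow>
     (\<forall>\<mu>'\<in>S. measure (bandit_space D L \<mu>')
        {\<omega> \<in> space (bandit_space D L \<mu>').
           save_hat D L \<mu>' T (\<lambda>i. pulls \<pi> (fst \<omega>) (snd \<omega>) i TFE) \<ge> \<alpha> * save_star D L \<mu>' T TFE}
        \<ge> 1 - real T powr (-\<beta>) / 2.4)"

end

theory Submission
  imports Defs
begin


definition HS :: "(real \<times> (nat \<Rightarrow> nat) \<times> (nat \<Rightarrow> real)) measure" where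
  "HS = borel \<Otimes>\<^sub>M ((\<Pi>\<^sub>M s\<in>UNIV. count_space (UNIV::nat set)) \<Otimes>\<^sub>M (\<Pi>\<^sub>M s\<in>UNIV. (borel :: real measure)))"

definition BS0 :: "nat \<Rightarrow> (real \<times> (nat \<times> nat \<Rightarrow> real)) measure" where
  "BS0 L = borel \<Otimes>\<^sub>M (\<Pi>\<^sub>M si\<in>UNIV \<times> {1..L}. (borel :: real measure))"

definition inp :: "nat \<Rightarrow> nat list \<Rightarrow> real \<times> (nat \<times> nat \<Rightarrow> real) \<Rightarrow> real \<times> (nat \<Rightarrow> nat) \<times> (nat \<Rightarrow> real)" where
  "inp n h \<omega> = (fst \<omega>, (\<lambda>s. if s < n then h ! s else 0), (\<lambda>s. if s < n then snd \<omega> (s, h ! s) else 0))"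

definition ahist :: "policy \<Rightarrow> nat \<Rightarrow> real \<times> (nat \<times> nat \<Rightarrow> real) \<Rightarrow> nat list" where
  "ahist \<pi> n \<omega> = arm_hist \<pi> (fst \<omega>) (snd \<omega>) n"

definition hist :: "policy \<Rightarrow> nat \<Rightarrow> real \<times> (nat \<times> nat \<Rightarrow> real) \<Rightarrow> real \<times> (nat \<Rightarrow> nat) \<times> (nat \<Rightarrow> real)" where
  "hist \<pi> n \<omega> = inp n (ahist \<pi> n \<omega>) \<omega>"

lemma ahist_Suc: "ahist \<pi> (Suc n) \<omega> = ahist \<pi> n \<omega> @ [\<pi> n (hist \<pi> n \<omega>)]"
  by (simp add: ahist_def hist_def inp_def Let_def)

lemma length_ahist[simp]: "length (ahist \<pi> n \<omega>) = n"
  by (induction n) (auto simp: ahist_Suc, simp add: ahist_def)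

lemma m_comp: "(\<lambda>\<omega>. snd \<omega> (s, k)) \<in> borel_measurable (BS0 L)"
proof (cases "(s,k) \<in> UNIV \<times> {1..L}")
  case True
  then show ?thesis unfolding BS0_def by measurable
next
  case False
  have "(\<lambda>\<omega>. undefined::real) \<in> borel_measurable (BS0 L)" by simp
  moreover have "\<omega> \<in> space (BS0 L) \<Longrightarrow> snd \<omega> (s, k) = undefined" for \<omega>
    using False by (auto simp: BS0_def space_pair_measure space_PiM PiE_def extensional_def)
  ultimately show ?thesis by (metis (no_types, lifting) measurable_cong)
qed

lemma m_inp: "inp n h \<in> BS0 L \<rightarrow>\<^sub>M HS"
  unfolding inp_def HS_def
proof (intro measurable_Pair)
  show "fst \<in> BS0 L \<rightarrow>\<^sub>M borel" unfolding BS0_def by simp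
  show "(\<lambda>\<omega>. \<lambda>s. if s < n then h ! s else 0) \<in> BS0 L \<rightarrow>\<^sub>M (\<Pi>\<^sub>M s\<in>UNIV. count_space UNIV)"
    by (rule measurable_const) (auto simp: space_PiM)
  show "(\<lambda>\<omega>. \<lambda>s. if s < n then snd \<omega> (s, h ! s) else 0) \<in> BS0 L \<rightarrow>\<^sub>M (\<Pi>\<^sub>M s\<in>UNIV. borel)"
    apply (rule measurable_PiM_single')
     apply (case_tac "s < n")
      apply (simp_all add: m_comp)
    done
qed

lemma (in -) m_ahist:
  assumes pm: "policy_measurable \<pi>"
  shows "ahist \<pi> n \<in> BS0 L \<rightarrow>\<^sub>M count_space UNIV"
proof (induction n)
  case 0
  then show ?case by (simp add: ahist_def)
next
  case (Suc n)
  have pi: "\<pi> n \<in> HS \<rightarrow>\<^sub>M count_space UNIV" using pm unfolding policy_measurable_def HS_def by blast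
  have "(\<lambda>\<omega>. (\<lambda>h. h @ [\<pi> n (inp n h \<omega>)]) (ahist \<pi> n \<omega>)) \<in> BS0 L \<rightarrow>\<^sub>M count_space UNIV"
  proof (rule measurable_compose_countable[OF _ Suc])
    fix h :: "nat list"
    have "(\<lambda>\<omega>. \<pi> n (inp n h \<omega>)) \<in> BS0 L \<rightarrow>\<^sub>M count_space UNIV"
      using measurable_comp[OF m_inp pi] by (simp add: comp_def)
    then show "(\<lambda>\<omega>. h @ [\<pi> n (inp n h \<omega>)]) \<in> BS0 L \<rightarrow>\<^sub>M count_space UNIV"
      by (rule measurable_compose) simp
  qed
  then show ?case by (simp add: ahist_Suc hist_def)
qed

lemma m_hist:
  assumes pm: "policy_measurable \<pi>"
  shows "hist \<pi> n \<in> BS0 L \<rightarrow>\<^sub>M HS"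
proof -
  have "(\<lambda>\<omega>. inp n (ahist \<pi> n \<omega>) \<omega>) \<in> BS0 L \<rightarrow>\<^sub>M HS"
    by (rule measurable_compose_countable[OF m_inp m_ahist[OF pm]])
  then show ?thesis by (simp add: hist_def[abs_def])
qed



locale bctx =
  fixes D :: "real \<Rightarrow> real measure" and I :: "real set" and L :: nat and \<pi> :: policy
    and \<rho> :: "real measure" and \<theta> Af :: "real \<Rightarrow> real"
  assumes rho_sets: "sets \<rho> = sets borel"
    and rho_null: "emeasure \<rho> (- {0..1}) = 0"
    and D_eq: "\<And>m. m \<in> I \<Longrightarrow> D m = density \<rho> (\<lambda>x. ennreal (exp (\<theta> m * x - Af m)))"
    and D_prob: "\<And>m. m \<in> I \<Longrightarrow> prob_space (D m)"
    and D_int: "\<And>m. m \<in> I \<Longrightarrow> integrable (D m) (\<lambda>x. x)"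
    and D_mean: "\<And>m. m \<in> I \<Longrightarrow> (\<integral>x. x \<partial>D m) = m"
    and arms: "\<And>t x. \<pi> t x \<in> {1..L}"
    and pmeas: "policy_measurable \<pi>"
begin

definition ok :: "(nat \<Rightarrow> real) \<Rightarrow> bool" where "ok \<mu>' \<longleftrightarrow> (\<forall>i\<in>{1..L}. \<mu>' i \<in> I)"

abbreviation "U \<equiv> uniform_measure lborel {0..1::real}"
abbreviation "PM \<mu>' \<equiv> (\<Pi>\<^sub>M si\<in>UNIV \<times> {1..L}. D (\<mu>' (snd si)))"

lemma sets_D: "m \<in> I \<Longrightarrow> sets (D m) = sets borel"
  using D_eq rho_sets by simp

lemma prob_U: "prob_space U"
  by (rule prob_space_uniform_measure) auto

lemma sets_U: "sets U = sets borel" by simp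

lemma prob_PM: "ok \<mu>' \<Longrightarrow> prob_space (PM \<mu>')"
  by (rule prob_space_PiM) (auto simp: ok_def intro: D_prob)

lemma sets_PM: "ok \<mu>' \<Longrightarrow> sets (PM \<mu>') = sets (\<Pi>\<^sub>M si\<in>UNIV \<times> {1..L}. (borel :: real measure))"
  by (rule sets_PiM_cong) (auto simp: ok_def sets_D)

lemma sets_B: "ok \<mu>' \<Longrightarrow> sets (bandit_space D L \<mu>') = sets (BS0 L)"
  unfolding bandit_space_def BS0_def
  by (rule sets_pair_measure_cong[OF sets_U sets_PM])

lemma space_B: "ok \<mu>' \<Longrightarrow> space (bandit_space D L \<mu>') = space (BS0 L)"
  using sets_B sets_eq_imp_space_eq by blast

lemma prob_B: "ok \<mu>' \<Longrightarrow> prob_space (bandit_space D L \<mu>')"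
  unfolding bandit_space_def
  by (intro prob_space_pair prob_U prob_PM)

lemma meas_B: "ok \<mu>' \<Longrightarrow> f \<in> BS0 L \<rightarrow>\<^sub>M N \<Longrightarrow> f \<in> bandit_space D L \<mu>' \<rightarrow>\<^sub>M N"
  using measurable_cong_sets[OF sets_B refl] by blast

lemma ahist_local:
  assumes "\<And>s k. s < n \<Longrightarrow> Y (s, k) = Y' (s, k)"
  shows "ahist \<pi>' n (u, Y) = ahist \<pi>' n (u, Y')"
  using assms
proof (induction n)
  case 0
  then show ?case by (simp add: ahist_def)
next
  case (Suc n)
  then have IH: "ahist \<pi>' n (u, Y) = ahist \<pi>' n (u, Y')" by simp
  have "hist \<pi>' n (u, Y) = hist \<pi>' n (u, Y')"
    unfolding hist_def inp_def IH using Suc.prems by (auto intro!: ext)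
  then show ?case by (simp add: ahist_Suc IH)
qed

lemma hist_local:
  assumes "\<And>s k. s < n \<Longrightarrow> Y (s, k) = Y' (s, k)"
  shows "hist \<pi>' n (u, Y) = hist \<pi>' n (u, Y')"
  using ahist_local[of n Y Y' \<pi>' u, OF assms] assms
  unfolding hist_def inp_def by (auto intro!: ext)

lemma B_eq: "bandit_space D L \<mu>' = U \<Otimes>\<^sub>M PM \<mu>'"
  by (simp add: bandit_space_def)

lemma key_i:
  assumes okm: "ok \<mu>'" and i: "i \<in> {1..L}" and K: "K \<in> borel_measurable (HS \<Otimes>\<^sub>M borel)"
  shows "(\<integral>\<^sup>+\<omega>. K (hist \<pi> n \<omega>, snd \<omega> (n, i)) \<partial>bandit_space D L \<mu>')
       = (\<integral>\<^sup>+\<omega>. (\<integral>\<^sup>+y. K (hist \<pi> n \<omega>, y) \<partial>D (\<mu>' i)) \<partial>bandit_space D L \<mu>')"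
proof -
  interpret Di: prob_space "D (\<mu>' i)" using D_prob okm i ok_def by auto
  interpret PMp: prob_space "PM \<mu>'" by (rule prob_PM[OF okm])
  interpret Up: prob_space U by (rule prob_U)
  interpret pair_sigma_finite U "PM \<mu>'" ..
  define F where "F h = (\<integral>\<^sup>+y. K (h, y) \<partial>D (\<mu>' i))" for h
  have sDi: "sets (D (\<mu>' i)) = sets borel" using okm i by (auto simp: ok_def sets_D)
  have sK: "sets (HS \<Otimes>\<^sub>M D (\<mu>' i)) = sets (HS \<Otimes>\<^sub>M borel)" by (rule sets_pair_measure_cong[OF refl sDi])
  have K': "K \<in> borel_measurable (HS \<Otimes>\<^sub>M D (\<mu>' i))" using K measurable_cong_sets[OF sK refl] by blast
  have mF: "F \<in> borel_measurable HS"
    unfolding F_def using Di.borel_measurable_nn_integral[of "\<lambda>h y. K (h, y)" HS] K' by simp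
  have mh: "hist \<pi> n \<in> BS0 L \<rightarrow>\<^sub>M HS" by (rule m_hist[OF pmeas])
  have sB: "sets (U \<Otimes>\<^sub>M PM \<mu>') = sets (BS0 L)" using sets_B[OF okm] unfolding B_eq .
  have mL0: "(\<lambda>\<omega>. K (hist \<pi> n \<omega>, snd \<omega> (n, i))) \<in> borel_measurable (BS0 L)"
    by (rule measurable_compose[OF measurable_Pair[OF mh m_comp] K])
  have mR0: "(\<lambda>\<omega>. F (hist \<pi> n \<omega>)) \<in> borel_measurable (BS0 L)"
    by (rule measurable_compose[OF mh mF])
  have mL: "(\<lambda>\<omega>. K (hist \<pi> n \<omega>, snd \<omega> (n, i))) \<in> borel_measurable (U \<Otimes>\<^sub>M PM \<mu>')"
    using mL0 measurable_cong_sets[OF sB refl] by blast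
  have mR: "(\<lambda>\<omega>. F (hist \<pi> n \<omega>)) \<in> borel_measurable (U \<Otimes>\<^sub>M PM \<mu>')"
    using mR0 measurable_cong_sets[OF sB refl] by blast
  define i' where "i' = (n, i)"
  define J0 where "J0 = (UNIV \<times> {1..L}) - {i'}"
  define Mi where "Mi = (\<lambda>si::nat\<times>nat. D (\<mu>' (snd si)))"
  have Ji: "insert i' J0 = UNIV \<times> {1..L}" using i by (auto simp: J0_def i'_def)
  have Mii: "Mi i' = D (\<mu>' i)" by (simp add: Mi_def i'_def)
  interpret PM0: prob_space "PiM J0 Mi"
    by (rule prob_space_PiM) (use okm in \<open>auto simp: ok_def Mi_def J0_def intro: D_prob\<close>)
  interpret pair2: pair_sigma_finite "D (\<mu>' i)" "PiM J0 Mi" ..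
  have PMeq: "distr (D (\<mu>' i) \<Otimes>\<^sub>M PiM J0 Mi) (PM \<mu>') (\<lambda>(x, X). X(i' := x)) = PM \<mu>'"
  proof -
    have pr: "\<And>j. j \<in> J0 \<Longrightarrow> prob_space (Mi j)" "prob_space (Mi i')"
      using okm i by (auto simp: ok_def Mi_def J0_def i'_def intro: D_prob)
    have "distr (Mi i' \<Otimes>\<^sub>M PiM J0 Mi) (PiM (insert i' J0) Mi) (\<lambda>(x, X). X(i' := x)) = PiM (insert i' J0) Mi"
      by (rule distr_pair_PiM_eq_PiM) (use pr in auto)
    then show ?thesis unfolding Ji Mii by (simp add: Mi_def)
  qed
  have mupd: "(\<lambda>z. (snd z)(i' := fst z)) \<in> (D (\<mu>' i) \<Otimes>\<^sub>M PiM J0 Mi) \<rightarrow>\<^sub>M PM \<mu>'"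
  proof -
    have "(\<lambda>z. (snd z)(i' := fst z)) \<in> (D (\<mu>' i) \<Otimes>\<^sub>M PiM J0 Mi) \<rightarrow>\<^sub>M PiM (UNIV \<times> {1..L}) Mi"
      by (rule measurable_fun_upd[where J=J0]) (use Ji Mii in auto)
    then show ?thesis by (simp add: Mi_def)
  qed
  have mupd': "(\<lambda>(x, X). X(i' := x)) \<in> (D (\<mu>' i) \<Otimes>\<^sub>M PiM J0 Mi) \<rightarrow>\<^sub>M PM \<mu>'"
    using mupd by (simp add: case_prod_beta')
  have inner: "(\<integral>\<^sup>+Y. K (hist \<pi> n (u, Y), Y (n, i)) \<partial>PM \<mu>') = (\<integral>\<^sup>+Y. F (hist \<pi> n (u, Y)) \<partial>PM \<mu>')"
    if u: "u \<in> space U" for u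
  proof -
    define hX where "hX X = hist \<pi> n (u, X(i' := 0))" for X
    have hXeq: "hist \<pi> n (u, X(i' := x)) = hX X" for X x
      unfolding hX_def by (rule hist_local) (auto simp: i'_def)
    have g1: "(\<lambda>Y. K (hist \<pi> n (u, Y), Y (n, i))) \<in> borel_measurable (PM \<mu>')"
      using measurable_compose_Pair1[OF u mL] by simp
    have g2: "(\<lambda>Y. F (hist \<pi> n (u, Y))) \<in> borel_measurable (PM \<mu>')"
      using measurable_compose_Pair1[OF u mR] by simp
    have mhX: "(\<lambda>z. hX (snd z)) \<in> (D (\<mu>' i) \<Otimes>\<^sub>M PiM J0 Mi) \<rightarrow>\<^sub>M HS"
    proof -
      have "(\<lambda>z. hist \<pi> n (u, (snd z)(i' := fst z))) \<in> (D (\<mu>' i) \<Otimes>\<^sub>M PiM J0 Mi) \<rightarrow>\<^sub>M HS"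
      proof (rule measurable_compose[OF mupd])
        show "(\<lambda>Y. hist \<pi> n (u, Y)) \<in> PM \<mu>' \<rightarrow>\<^sub>M HS"
          using measurable_compose_Pair1[OF u] mh measurable_cong_sets[OF sB refl] by blast
      qed
      then show ?thesis by (simp add: hXeq)
    qed
    have mK2: "(\<lambda>z. K (hX (snd z), fst z)) \<in> borel_measurable (D (\<mu>' i) \<Otimes>\<^sub>M PiM J0 Mi)"
    proof -
      have "fst \<in> (D (\<mu>' i) \<Otimes>\<^sub>M PiM J0 Mi) \<rightarrow>\<^sub>M D (\<mu>' i)" by (rule measurable_fst)
      then have mfst: "fst \<in> (D (\<mu>' i) \<Otimes>\<^sub>M PiM J0 Mi) \<rightarrow>\<^sub>M borel"
        using measurable_cong_sets[OF refl sDi] by blast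
      show ?thesis by (rule measurable_compose[OF measurable_Pair[OF mhX mfst] K])
    qed
    have mF2: "(\<lambda>z. F (hX (snd z))) \<in> borel_measurable (D (\<mu>' i) \<Otimes>\<^sub>M PiM J0 Mi)"
      by (rule measurable_compose[OF mhX mF])
    have "(\<integral>\<^sup>+Y. K (hist \<pi> n (u, Y), Y (n, i)) \<partial>PM \<mu>')
        = (\<integral>\<^sup>+Y. K (hist \<pi> n (u, Y), Y (n, i)) \<partial>distr (D (\<mu>' i) \<Otimes>\<^sub>M PiM J0 Mi) (PM \<mu>') (\<lambda>(x, X). X(i' := x)))"
      using PMeq by simp
    also have "\<dots> = (\<integral>\<^sup>+z. K (hX (snd z), fst z) \<partial>(D (\<mu>' i) \<Otimes>\<^sub>M PiM J0 Mi))"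
      by (subst nn_integral_distr[OF mupd']) (use g1 in \<open>auto simp: hXeq[unfolded i'_def] i'_def case_prod_beta'\<close>)
    also have "\<dots> = (\<integral>\<^sup>+X. (\<integral>\<^sup>+x. K (hX X, x) \<partial>D (\<mu>' i)) \<partial>PiM J0 Mi)"
      using pair2.nn_integral_snd[OF mK2] by simp
    also have "\<dots> = (\<integral>\<^sup>+X. F (hX X) \<partial>PiM J0 Mi)" by (simp add: F_def)
    also have "\<dots> = (\<integral>\<^sup>+X. (\<integral>\<^sup>+x. F (hX X) \<partial>D (\<mu>' i)) \<partial>PiM J0 Mi)"
      by (simp add: Di.emeasure_space_1)
    also have "\<dots> = (\<integral>\<^sup>+z. F (hX (snd z)) \<partial>(D (\<mu>' i) \<Otimes>\<^sub>M PiM J0 Mi))"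
      using pair2.nn_integral_snd[OF mF2] by simp
    also have "\<dots> = (\<integral>\<^sup>+Y. F (hist \<pi> n (u, Y)) \<partial>distr (D (\<mu>' i) \<Otimes>\<^sub>M PiM J0 Mi) (PM \<mu>') (\<lambda>(x, X). X(i' := x)))"
      by (subst nn_integral_distr[OF mupd']) (use g2 in \<open>auto simp: hXeq case_prod_beta'\<close>)
    also have "\<dots> = (\<integral>\<^sup>+Y. F (hist \<pi> n (u, Y)) \<partial>PM \<mu>')"
      using PMeq by simp
    finally show ?thesis .
  qed
  have "(\<integral>\<^sup>+\<omega>. K (hist \<pi> n \<omega>, snd \<omega> (n, i)) \<partial>bandit_space D L \<mu>')
      = (\<integral>\<^sup>+u. (\<integral>\<^sup>+Y. K (hist \<pi> n (u, Y), Y (n, i)) \<partial>PM \<mu>') \<partial>U)"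
    using PMp.nn_integral_fst[OF mL] by (simp add: B_eq)
  also have "\<dots> = (\<integral>\<^sup>+u. (\<integral>\<^sup>+Y. F (hist \<pi> n (u, Y)) \<partial>PM \<mu>') \<partial>U)"
    by (rule nn_integral_cong) (rule inner)
  also have "\<dots> = (\<integral>\<^sup>+\<omega>. F (hist \<pi> n \<omega>) \<partial>bandit_space D L \<mu>')"
    using PMp.nn_integral_fst[OF mR] by (simp add: B_eq)
  finally show ?thesis by (simp add: F_def)
qed

lemma m_pi[measurable]: "\<pi> n \<in> HS \<rightarrow>\<^sub>M count_space UNIV"
  using pmeas unfolding policy_measurable_def HS_def by blast

lemma m_Ki:
  assumes K[measurable]: "K \<in> borel_measurable (HS \<Otimes>\<^sub>M borel)"
  shows "(\<lambda>z. if \<pi> n (fst z) = i then K z else 0) \<in> borel_measurable (HS \<Otimes>\<^sub>M borel)"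
  by measurable

lemma key:
  assumes okm: "ok \<mu>'" and K: "K \<in> borel_measurable (HS \<Otimes>\<^sub>M borel)"
  shows "(\<integral>\<^sup>+\<omega>. K (hist \<pi> n \<omega>, snd \<omega> (n, \<pi> n (hist \<pi> n \<omega>))) \<partial>bandit_space D L \<mu>')
       = (\<integral>\<^sup>+\<omega>. (\<integral>\<^sup>+y. K (hist \<pi> n \<omega>, y) \<partial>D (\<mu>' (\<pi> n (hist \<pi> n \<omega>)))) \<partial>bandit_space D L \<mu>')"
proof -
  define Ki where "Ki i = (\<lambda>z. if \<pi> n (fst z) = i then K z else 0)" for i
  have mKi: "Ki i \<in> borel_measurable (HS \<Otimes>\<^sub>M borel)" for i
    unfolding Ki_def by (rule m_Ki[OF K])
  have mh: "hist \<pi> n \<in> bandit_space D L \<mu>' \<rightarrow>\<^sub>M HS" by (rule meas_B[OF okm m_hist[OF pmeas]])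
  have mc: "(\<lambda>\<omega>. snd \<omega> (n, i)) \<in> borel_measurable (bandit_space D L \<mu>')" for i
    by (rule meas_B[OF okm m_comp])
  have mL: "(\<lambda>\<omega>. Ki i (hist \<pi> n \<omega>, snd \<omega> (n, i))) \<in> borel_measurable (bandit_space D L \<mu>')" for i
    by (rule measurable_compose[OF measurable_Pair[OF mh mc] mKi])
  have mR: "(\<lambda>\<omega>. (\<integral>\<^sup>+y. Ki i (hist \<pi> n \<omega>, y) \<partial>D (\<mu>' i))) \<in> borel_measurable (bandit_space D L \<mu>')"
    if i: "i \<in> {1..L}" for i
  proof -
    interpret Di: prob_space "D (\<mu>' i)" using D_prob okm i ok_def by auto
    have sDi: "sets (D (\<mu>' i)) = sets borel" using okm i by (auto simp: ok_def sets_D)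
    have sK: "sets (HS \<Otimes>\<^sub>M D (\<mu>' i)) = sets (HS \<Otimes>\<^sub>M borel)" by (rule sets_pair_measure_cong[OF refl sDi])
    have K': "Ki i \<in> borel_measurable (HS \<Otimes>\<^sub>M D (\<mu>' i))" using mKi measurable_cong_sets[OF sK refl] by blast
    have "(\<lambda>h. \<integral>\<^sup>+y. Ki i (h, y) \<partial>D (\<mu>' i)) \<in> borel_measurable HS"
      using Di.borel_measurable_nn_integral[of "\<lambda>h y. Ki i (h, y)" HS] K' by simp
    then show ?thesis by (rule measurable_compose[OF mh])
  qed
  have eqL: "K (hist \<pi> n \<omega>, snd \<omega> (n, \<pi> n (hist \<pi> n \<omega>))) = (\<Sum>i\<in>{1..L}. Ki i (hist \<pi> n \<omega>, snd \<omega> (n, i)))" for \<omega>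
  proof -
    have a: "\<pi> n (hist \<pi> n \<omega>) \<in> {1..L}" by (rule arms)
    have "(\<Sum>i\<in>{1..L}. Ki i (hist \<pi> n \<omega>, snd \<omega> (n, i))) = Ki (\<pi> n (hist \<pi> n \<omega>)) (hist \<pi> n \<omega>, snd \<omega> (n, \<pi> n (hist \<pi> n \<omega>)))"
      by (subst sum.remove[OF _ a]) (auto simp: Ki_def intro!: sum.neutral)
    then show ?thesis by (simp add: Ki_def)
  qed
  have eqR: "(\<integral>\<^sup>+y. K (hist \<pi> n \<omega>, y) \<partial>D (\<mu>' (\<pi> n (hist \<pi> n \<omega>)))) = (\<Sum>i\<in>{1..L}. \<integral>\<^sup>+y. Ki i (hist \<pi> n \<omega>, y) \<partial>D (\<mu>' i))" for \<omega>
  proof -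
    have a: "\<pi> n (hist \<pi> n \<omega>) \<in> {1..L}" by (rule arms)
    have "(\<Sum>i\<in>{1..L}. \<integral>\<^sup>+y. Ki i (hist \<pi> n \<omega>, y) \<partial>D (\<mu>' i)) = (\<integral>\<^sup>+y. Ki (\<pi> n (hist \<pi> n \<omega>)) (hist \<pi> n \<omega>, y) \<partial>D (\<mu>' (\<pi> n (hist \<pi> n \<omega>))))"
      by (subst sum.remove[OF _ a]) (auto simp: Ki_def intro!: sum.neutral)
    then show ?thesis by (simp add: Ki_def)
  qed
  have "(\<integral>\<^sup>+\<omega>. K (hist \<pi> n \<omega>, snd \<omega> (n, \<pi> n (hist \<pi> n \<omega>))) \<partial>bandit_space D L \<mu>')
      = (\<Sum>i\<in>{1..L}. \<integral>\<^sup>+\<omega>. Ki i (hist \<pi> n \<omega>, snd \<omega> (n, i)) \<partial>bandit_space D L \<mu>')"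
    unfolding eqL by (rule nn_integral_sum) (rule mL)
  also have "\<dots> = (\<Sum>i\<in>{1..L}. \<integral>\<^sup>+\<omega>. (\<integral>\<^sup>+y. Ki i (hist \<pi> n \<omega>, y) \<partial>D (\<mu>' i)) \<partial>bandit_space D L \<mu>')"
    by (rule sum.cong[OF refl]) (rule key_i[OF okm _ mKi])
  also have "\<dots> = (\<integral>\<^sup>+\<omega>. (\<integral>\<^sup>+y. K (hist \<pi> n \<omega>, y) \<partial>D (\<mu>' (\<pi> n (hist \<pi> n \<omega>)))) \<partial>bandit_space D L \<mu>')"
    unfolding eqR by (rule nn_integral_sum[symmetric]) (rule mR)
  finally show ?thesis .
qed

end


definition clamp :: "real \<Rightarrow> real" where "clamp x = max 0 (min 1 x)"

lemma clamp_id: "x \<in> {0..1} \<Longrightarrow> clamp x = x" by (auto simp: clamp_def)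
lemma clamp_range: "0 \<le> clamp x" "clamp x \<le> 1" by (auto simp: clamp_def)
lemma m_clamp[measurable]: "clamp \<in> borel_measurable borel" unfolding clamp_def by measurable

definition ext :: "policy \<Rightarrow> nat \<Rightarrow> real \<times> (nat \<Rightarrow> nat) \<times> (nat \<Rightarrow> real) \<Rightarrow> real \<Rightarrow> real \<times> (nat \<Rightarrow> nat) \<times> (nat \<Rightarrow> real)" where
  "ext \<pi> n h y = (fst h, (fst (snd h))(n := \<pi> n h), (snd (snd h))(n := y))"

lemma hist_Suc: "hist \<pi> (Suc n) \<omega> = ext \<pi> n (hist \<pi> n \<omega>) (snd \<omega> (n, \<pi> n (hist \<pi> n \<omega>)))"
proof -
  have len: "length (ahist \<pi> n \<omega>) = n" by simp
  show ?thesis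
    unfolding hist_def[of \<pi> "Suc n"] ahist_Suc
    by (simp add: ext_def inp_def hist_def nth_append len fun_eq_iff)
qed

lemma hist_0: "hist \<pi> 0 \<omega> = (fst \<omega>, (\<lambda>s. 0), (\<lambda>s. 0))"
  by (simp add: hist_def inp_def)

lemma space_HS[simp]: "space HS = UNIV"
  by (auto simp: HS_def space_pair_measure space_PiM)

lemma m_HS_comps[measurable]:
  "fst \<in> HS \<rightarrow>\<^sub>M borel"
  "(\<lambda>h. fst (snd h) s) \<in> HS \<rightarrow>\<^sub>M count_space UNIV"
  "(\<lambda>h. snd (snd h) s) \<in> HS \<rightarrow>\<^sub>M borel"
  unfolding HS_def by simp_all

lemma m_ext: 
  assumes pm: "policy_measurable \<pi>"
  shows "(\<lambda>z. ext \<pi> n (fst z) (snd z)) \<in> (HS \<Otimes>\<^sub>M borel) \<rightarrow>\<^sub>M HS"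
proof -
  have pi[measurable]: "\<pi> n \<in> HS \<rightarrow>\<^sub>M count_space UNIV"
    using pm unfolding policy_measurable_def HS_def by blast
  have "(\<lambda>z. ext \<pi> n (fst z) (snd z)) \<in> (HS \<Otimes>\<^sub>M borel) \<rightarrow>\<^sub>M
     (borel \<Otimes>\<^sub>M ((\<Pi>\<^sub>M s\<in>UNIV. count_space (UNIV::nat set)) \<Otimes>\<^sub>M (\<Pi>\<^sub>M s\<in>UNIV. (borel :: real measure))))"
    unfolding ext_def
    apply (intro measurable_Pair)
      apply simp
     apply (rule measurable_PiM_single')
      apply (case_tac "i = n")
       apply simp
      apply simp
     apply (simp add: space_PiM)
    apply (rule measurable_PiM_single')
     apply (case_tac "i = n")
      apply simp
     apply simp
    apply (simp add: space_PiM)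
    done
  then show ?thesis unfolding HS_def .
qed



context bctx begin

lemma AE_rho01: "AE x in \<rho>. x \<in> {0..1}"
proof (rule AE_I'[of "- {0..1}"])
  show "- {0..1} \<in> null_sets \<rho>" using rho_null rho_sets by (auto simp: null_sets_def)
qed auto

lemma m_rho: "f \<in> borel_measurable borel \<Longrightarrow> f \<in> borel_measurable \<rho>"
  using measurable_cong_sets[OF rho_sets refl] by blast

lemma AE_D01:
  assumes m: "m \<in> I" shows "AE x in D m. x \<in> {0..1}"
proof -
  have mf: "(\<lambda>x. ennreal (exp (\<theta> m * x - Af m))) \<in> borel_measurable \<rho>" by (intro m_rho) measurable
  show ?thesis unfolding D_eq[OF m] AE_density[OF mf]
    by (rule AE_mp[OF AE_rho01]) auto
qed

end

locale bctx2 = bctx +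
  fixes \<mu> \<mu>1 :: "nat \<Rightarrow> real"
  assumes okP: "ok \<mu>" and okQ: "ok \<mu>1"
begin

definition lr :: "nat \<Rightarrow> real \<Rightarrow> real" where
  "lr i x = exp ((\<theta> (\<mu>1 i) - \<theta> (\<mu> i)) * clamp x - (Af (\<mu>1 i) - Af (\<mu> i)))"

lemma lr_pos: "lr i x > 0" by (simp add: lr_def)

lemma m_lr[measurable]: "(\<lambda>x. lr i x) \<in> borel_measurable borel" unfolding lr_def by measurable

lemma dens:
  assumes i: "i \<in> {1..L}"
  shows "D (\<mu>1 i) = density (D (\<mu> i)) (\<lambda>x. ennreal (lr i x))"
proof -
  have a: "\<mu> i \<in> I" and b: "\<mu>1 i \<in> I" using okP okQ i by (auto simp: ok_def)
  have "density (D (\<mu> i)) (\<lambda>x. ennreal (lr i x))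
     = density \<rho> (\<lambda>x. ennreal (exp (\<theta> (\<mu> i) * x - Af (\<mu> i))) * ennreal (lr i x))"
    unfolding D_eq[OF a] by (rule density_density_eq) (auto intro!: m_rho)
  also have "\<dots> = density \<rho> (\<lambda>x. ennreal (exp (\<theta> (\<mu>1 i) * x - Af (\<mu>1 i))))"
  proof (rule density_cong)
    show "AE x in \<rho>. ennreal (exp (\<theta> (\<mu> i) * x - Af (\<mu> i))) * ennreal (lr i x) = ennreal (exp (\<theta> (\<mu>1 i) * x - Af (\<mu>1 i)))"
      using AE_rho01
    proof eventually_elim
      case (elim x)
      then have "clamp x = x" by (rule clamp_id)
      then show ?case
        by (simp add: lr_def ennreal_mult''[symmetric] exp_add[symmetric] algebra_simps)
    qed
  qed (auto intro!: m_rho)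
  finally show ?thesis using D_eq[OF b] by simp
qed

definition lam :: "nat \<Rightarrow> real \<times> (nat \<Rightarrow> nat) \<times> (nat \<Rightarrow> real) \<Rightarrow> ennreal" where
  "lam n h = (\<Prod>s<n. ennreal (lr (fst (snd h) s) (snd (snd h) s)))"

lemma m_lam[measurable]: "lam n \<in> borel_measurable HS"
proof -
  have "(\<lambda>h. ennreal (lr (fst (snd h) s) (snd (snd h) s))) \<in> borel_measurable HS" for s
  proof -
    have "(\<lambda>h. (\<lambda>i h. ennreal (lr i (snd (snd h) s))) (fst (snd h) s) h) \<in> borel_measurable HS"
      by (rule measurable_compose_countable[where f="\<lambda>i h. ennreal (lr i (snd (snd h) s))"]) measurable
    then show ?thesis by simp
  qed
  then show ?thesis unfolding lam_def by (intro borel_measurable_prod_ennreal) auto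
qed

lemma lam_ext: "lam (Suc n) (ext \<pi> n h y) = lam n h * ennreal (lr (\<pi> n h) y)"
  unfolding lam_def ext_def by (simp add: prod.lessThan_Suc)

abbreviation "P \<equiv> bandit_space D L \<mu>"
abbreviation "Q \<equiv> bandit_space D L \<mu>1"

lemma m_int:
  assumes okm: "ok \<mu>'" and K: "K \<in> borel_measurable (HS \<Otimes>\<^sub>M borel)"
  shows "(\<lambda>h. \<integral>\<^sup>+y. K (h, y) \<partial>D (\<mu>' (\<pi> n h))) \<in> borel_measurable HS"
proof -
  define F where "F i h = (if i \<in> {1..L} then \<integral>\<^sup>+y. K (h, y) \<partial>D (\<mu>' i) else 0)" for i h
  have "(\<lambda>h. F i h) \<in> borel_measurable HS" for i
  proof (cases "i \<in> {1..L}")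
    case True
    interpret Di: prob_space "D (\<mu>' i)" using D_prob okm True ok_def by auto
    have sDi: "sets (D (\<mu>' i)) = sets borel" using okm True by (auto simp: ok_def sets_D)
    have sK: "sets (HS \<Otimes>\<^sub>M D (\<mu>' i)) = sets (HS \<Otimes>\<^sub>M borel)" by (rule sets_pair_measure_cong[OF refl sDi])
    have K': "K \<in> borel_measurable (HS \<Otimes>\<^sub>M D (\<mu>' i))" using K measurable_cong_sets[OF sK refl] by blast
    show ?thesis
      using Di.borel_measurable_nn_integral[of "\<lambda>h y. K (h, y)" HS] K' True by (simp add: F_def)
  next
    case False
    then have "F i = (\<lambda>h. 0)" by (auto simp: F_def fun_eq_iff)
    then show ?thesis by simp
  qed
  then have "(\<lambda>h. F (\<pi> n h) h) \<in> borel_measurable HS"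
    by (rule measurable_compose_countable) (rule m_pi)
  moreover have "F (\<pi> n h) h = (\<integral>\<^sup>+y. K (h, y) \<partial>D (\<mu>' (\<pi> n h)))" for h
    using arms by (simp add: F_def)
  ultimately show ?thesis by simp
qed

lemma change:
  assumes G: "G \<in> borel_measurable HS"
  shows "(\<integral>\<^sup>+\<omega>. G (hist \<pi> n \<omega>) \<partial>Q) = (\<integral>\<^sup>+\<omega>. G (hist \<pi> n \<omega>) * lam n (hist \<pi> n \<omega>) \<partial>P)"
  using G
proof (induction n arbitrary: G)
  case 0
  have base: "(\<integral>\<^sup>+\<omega>. G (hist \<pi> 0 \<omega>) \<partial>bandit_space D L \<mu>') = (\<integral>\<^sup>+u. G (u, (\<lambda>s. 0), (\<lambda>s. 0)) \<partial>U)"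
    if okm: "ok \<mu>'" for \<mu>'
  proof -
    interpret PMp: prob_space "PM \<mu>'" by (rule prob_PM[OF okm])
    have mG: "(\<lambda>\<omega>. G (hist \<pi> 0 \<omega>)) \<in> borel_measurable (U \<Otimes>\<^sub>M PM \<mu>')"
      using meas_B[OF okm measurable_compose[OF m_hist[OF pmeas] "0.prems"]] by (simp add: B_eq)
    have "(\<integral>\<^sup>+\<omega>. G (hist \<pi> 0 \<omega>) \<partial>bandit_space D L \<mu>') = (\<integral>\<^sup>+u. (\<integral>\<^sup>+Y. G (hist \<pi> 0 (u, Y)) \<partial>PM \<mu>') \<partial>U)"
      using PMp.nn_integral_fst[OF mG] by (simp add: B_eq)
    also have "\<dots> = (\<integral>\<^sup>+u. G (u, (\<lambda>s. 0), (\<lambda>s. 0)) \<partial>U)"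
      by (simp add: hist_0 PMp.emeasure_space_1[simplified])
    finally show ?thesis .
  qed
  show ?case using base[OF okP] base[OF okQ] by (simp add: lam_def)
next
  case (Suc n)
  have G: "G \<in> borel_measurable HS" by fact
  have mE: "(\<lambda>z. ext \<pi> n (fst z) (snd z)) \<in> (HS \<Otimes>\<^sub>M borel) \<rightarrow>\<^sub>M HS" by (rule m_ext[OF pmeas])
  define K1 where "K1 z = G (ext \<pi> n (fst z) (snd z))" for z
  have mK1: "K1 \<in> borel_measurable (HS \<Otimes>\<^sub>M borel)" unfolding K1_def by (rule measurable_compose[OF mE G])
  define G' where "G' h = (\<integral>\<^sup>+y. K1 (h, y) \<partial>D (\<mu>1 (\<pi> n h)))" for h
  have mG': "G' \<in> borel_measurable HS" unfolding G'_def by (rule m_int[OF okQ mK1])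
  define K2 where "K2 z = K1 z * ennreal (lr (\<pi> n (fst z)) (snd z)) * lam n (fst z)" for z
  have mK2: "K2 \<in> borel_measurable (HS \<Otimes>\<^sub>M borel)"
  proof -
    have [measurable]: "K1 \<in> borel_measurable (HS \<Otimes>\<^sub>M borel)" by (rule mK1)
    have "(\<lambda>z. (\<lambda>i z. ennreal (lr i (snd z))) (\<pi> n (fst z)) z) \<in> borel_measurable (HS \<Otimes>\<^sub>M borel)"
      by (rule measurable_compose_countable[where f="\<lambda>i z. ennreal (lr i (snd z))"]) measurable
    then show ?thesis unfolding K2_def by measurable
  qed
  have step3: "G' h * lam n h = (\<integral>\<^sup>+y. K2 (h, y) \<partial>D (\<mu> (\<pi> n h)))" for h
  proof -
    have i: "\<pi> n h \<in> {1..L}" by (rule arms)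
    have sD: "sets (D (\<mu> (\<pi> n h))) = sets borel" using okP i by (auto simp: ok_def sets_D)
    have mk: "(\<lambda>y. K1 (h, y)) \<in> borel_measurable (D (\<mu> (\<pi> n h)))"
      using measurable_Pair2[OF mK1, of h] measurable_cong_sets[OF sD refl] by auto
    have "(\<lambda>x. ennreal (lr (\<pi> n h) x)) \<in> borel_measurable borel" by measurable
    then have mlr: "(\<lambda>x. ennreal (lr (\<pi> n h) x)) \<in> borel_measurable (D (\<mu> (\<pi> n h)))"
      using measurable_cong_sets[OF sD refl] by blast
    have "G' h = (\<integral>\<^sup>+y. ennreal (lr (\<pi> n h) y) * K1 (h, y) \<partial>D (\<mu> (\<pi> n h)))"
      unfolding G'_def dens[OF i] by (rule nn_integral_density[OF mlr mk])
    moreover have "(\<lambda>y. ennreal (lr (\<pi> n h) y) * K1 (h, y)) \<in> borel_measurable (D (\<mu> (\<pi> n h)))"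
      using mlr mk by measurable
    ultimately have "G' h * lam n h = (\<integral>\<^sup>+y. ennreal (lr (\<pi> n h) y) * K1 (h, y) * lam n h \<partial>D (\<mu> (\<pi> n h)))"
      by (simp add: nn_integral_multc)
    then show ?thesis by (simp add: K2_def ac_simps)
  qed
  have "(\<integral>\<^sup>+\<omega>. G (hist \<pi> (Suc n) \<omega>) \<partial>Q) = (\<integral>\<^sup>+\<omega>. K1 (hist \<pi> n \<omega>, snd \<omega> (n, \<pi> n (hist \<pi> n \<omega>))) \<partial>Q)"
    by (simp add: hist_Suc K1_def)
  also have "\<dots> = (\<integral>\<^sup>+\<omega>. G' (hist \<pi> n \<omega>) \<partial>Q)"
    unfolding G'_def by (rule key[OF okQ mK1])
  also have "\<dots> = (\<integral>\<^sup>+\<omega>. G' (hist \<pi> n \<omega>) * lam n (hist \<pi> n \<omega>) \<partial>P)"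
    by (rule Suc.IH[OF mG'])
  also have "\<dots> = (\<integral>\<^sup>+\<omega>. (\<integral>\<^sup>+y. K2 (hist \<pi> n \<omega>, y) \<partial>D (\<mu> (\<pi> n (hist \<pi> n \<omega>)))) \<partial>P)"
    by (simp add: step3)
  also have "\<dots> = (\<integral>\<^sup>+\<omega>. K2 (hist \<pi> n \<omega>, snd \<omega> (n, \<pi> n (hist \<pi> n \<omega>))) \<partial>P)"
    by (rule key[OF okP mK2, symmetric])
  also have "\<dots> = (\<integral>\<^sup>+\<omega>. G (hist \<pi> (Suc n) \<omega>) * lam (Suc n) (hist \<pi> (Suc n) \<omega>) \<partial>P)"
    by (simp add: hist_Suc K1_def K2_def lam_ext ac_simps)
  finally show ?case .
qed

end


lemma ahist_nth: "s < n \<Longrightarrow> ahist \<pi> n \<omega> ! s = \<pi> s (hist \<pi> s \<omega>)"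
proof (induction n)
  case 0 then show ?case by simp
next
  case (Suc n)
  then show ?case by (cases "s = n") (auto simp: ahist_Suc nth_append)
qed

lemma hist_A: "s < n \<Longrightarrow> fst (snd (hist \<pi> n \<omega>)) s = \<pi> s (hist \<pi> s \<omega>)"
  by (simp add: hist_def inp_def ahist_nth)

lemma hist_X: "s < n \<Longrightarrow> snd (snd (hist \<pi> n \<omega>)) s = snd \<omega> (s, \<pi> s (hist \<pi> s \<omega>))"
  by (simp add: hist_def inp_def ahist_nth)

context bctx2 begin

definition phi :: "nat \<Rightarrow> real \<Rightarrow> real" where
  "phi i x = (\<theta> (\<mu>1 i) - \<theta> (\<mu> i)) * clamp x - (Af (\<mu>1 i) - Af (\<mu> i))"

lemma lr_phi: "lr i x = exp (phi i x)" by (simp add: lr_def phi_def)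

lemma m_phi[measurable]: "phi i \<in> borel_measurable borel" unfolding phi_def by measurable

definition Cb :: real where "Cb = (\<Sum>i\<in>{1..L}. \<bar>\<theta> (\<mu>1 i) - \<theta> (\<mu> i)\<bar> + \<bar>Af (\<mu>1 i) - Af (\<mu> i)\<bar>)"

lemma phi_bound: assumes i: "i \<in> {1..L}" shows "\<bar>phi i x\<bar> \<le> Cb"
proof -
  have "\<bar>phi i x\<bar> \<le> \<bar>\<theta> (\<mu>1 i) - \<theta> (\<mu> i)\<bar> * \<bar>clamp x\<bar> + \<bar>Af (\<mu>1 i) - Af (\<mu> i)\<bar>"
    unfolding phi_def abs_mult[symmetric] by (rule abs_triangle_ineq4)
  also have "\<bar>\<theta> (\<mu>1 i) - \<theta> (\<mu> i)\<bar> * \<bar>clamp x\<bar> \<le> \<bar>\<theta> (\<mu>1 i) - \<theta> (\<mu> i)\<bar>"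
    using clamp_range[of x] by (intro mult_left_le) auto
  then have "\<bar>\<theta> (\<mu>1 i) - \<theta> (\<mu> i)\<bar> * \<bar>clamp x\<bar> + \<bar>Af (\<mu>1 i) - Af (\<mu> i)\<bar> \<le> \<bar>\<theta> (\<mu>1 i) - \<theta> (\<mu> i)\<bar> + \<bar>Af (\<mu>1 i) - Af (\<mu> i)\<bar>"
    by linarith
  also have "\<dots> \<le> Cb" unfolding Cb_def
    by (rule member_le_sum[OF i]) simp_all
  finally show ?thesis .
qed

lemma Cb_nonneg: "0 \<le> Cb" unfolding Cb_def by (intro sum_nonneg) auto

lemma Dkl_eq:
  assumes i: "i \<in> {1..L}"
  shows "Dkl (D (\<mu> i)) (D (\<mu>1 i)) = - (\<integral>x. phi i x \<partial>D (\<mu> i))"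
proof -
  have a: "\<mu> i \<in> I" and b: "\<mu>1 i \<in> I" using okP okQ i by (auto simp: ok_def)
  interpret M1: prob_space "D (\<mu>1 i)" by (rule D_prob[OF b])
  have sD: "sets (D (\<mu> i)) = sets borel" "sets (D (\<mu>1 i)) = sets borel" using a b by (auto simp: sets_D)
  have "(\<lambda>x. ennreal (lr i x)) \<in> borel_measurable borel" by measurable
  then have mlr: "(\<lambda>x. ennreal (lr i x)) \<in> borel_measurable (D (\<mu> i))"
    using measurable_cong_sets[OF sD(1) refl] by blast
  have "(\<lambda>x. ennreal (1 / lr i x)) \<in> borel_measurable borel" by measurable
  then have minv: "(\<lambda>x. ennreal (1 / lr i x)) \<in> borel_measurable (D (\<mu>1 i))"
    and minv': "(\<lambda>x. ennreal (1 / lr i x)) \<in> borel_measurable (D (\<mu> i))"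
    using measurable_cong_sets[OF sD(2) refl] measurable_cong_sets[OF sD(1) refl] by blast+
  have Dmu: "D (\<mu> i) = density (D (\<mu>1 i)) (\<lambda>x. ennreal (1 / lr i x))"
  proof -
    have "density (D (\<mu>1 i)) (\<lambda>x. ennreal (1 / lr i x)) = density (D (\<mu> i)) (\<lambda>x. ennreal (lr i x) * ennreal (1 / lr i x))"
      unfolding dens[OF i] by (rule density_density_eq[OF mlr minv'])
    also have "(\<lambda>x. ennreal (lr i x) * ennreal (1 / lr i x)) = (\<lambda>x. 1)"
    proof (rule ext)
      fix x
      have p: "0 < lr i x" by (rule lr_pos)
      have "ennreal (lr i x) * ennreal (1 / lr i x) = ennreal (lr i x * (1 / lr i x))"
        using p by (intro ennreal_mult[symmetric]) auto
      also have "\<dots> = 1" using p by simp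
      finally show "ennreal (lr i x) * ennreal (1 / lr i x) = 1" .
    qed
    also have "density (D (\<mu> i)) (\<lambda>x. 1) = D (\<mu> i)" by (rule density_1)
    finally show ?thesis by simp
  qed
  have "density (D (\<mu>1 i)) (RN_deriv (D (\<mu>1 i)) (D (\<mu> i))) = density (D (\<mu>1 i)) (\<lambda>x. ennreal (1 / lr i x))"
  proof -
    have "density (D (\<mu>1 i)) (RN_deriv (D (\<mu>1 i)) (density (D (\<mu>1 i)) (\<lambda>x. ennreal (1 / lr i x)))) = density (D (\<mu>1 i)) (\<lambda>x. ennreal (1 / lr i x))"
      by (rule density_RN_deriv_density[OF minv])
    then show ?thesis by (simp only: Dmu[symmetric])
  qed
  then have ae1: "AE x in D (\<mu>1 i). RN_deriv (D (\<mu>1 i)) (D (\<mu> i)) x = ennreal (1 / lr i x)"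
    by (intro M1.density_unique minv borel_measurable_RN_deriv)
  have "AE x in density (D (\<mu>1 i)) (\<lambda>x. ennreal (1 / lr i x)). RN_deriv (D (\<mu>1 i)) (D (\<mu> i)) x = ennreal (1 / lr i x)"
    unfolding AE_density[OF minv] using ae1 by eventually_elim auto
  then have ae: "AE x in D (\<mu> i). RN_deriv (D (\<mu>1 i)) (D (\<mu> i)) x = ennreal (1 / lr i x)"
    by (simp only: Dmu[symmetric])
  have "Dkl (D (\<mu> i)) (D (\<mu>1 i)) = (\<integral>x. entropy_density (exp 1) (D (\<mu>1 i)) (D (\<mu> i)) x \<partial>D (\<mu> i))"
    by (simp add: Dkl_def KL_divergence_def)
  also have "\<dots> = (\<integral>x. - phi i x \<partial>D (\<mu> i))"
  proof (rule integral_cong_AE)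
    show "AE x in D (\<mu> i). entropy_density (exp 1) (D (\<mu>1 i)) (D (\<mu> i)) x = - phi i x"
      using ae
    proof eventually_elim
      case (elim x)
      have "entropy_density (exp 1) (D (\<mu>1 i)) (D (\<mu> i)) x = log (exp 1) (enn2real (RN_deriv (D (\<mu>1 i)) (D (\<mu> i)) x))"
        by (simp add: entropy_density_def)
      also have "\<dots> = log (exp 1) (1 / lr i x)" using elim lr_pos[of i x] by simp
      also have "\<dots> = ln (1 / lr i x)" by (simp add: log_def)
      also have "\<dots> = - phi i x" by (simp add: lr_phi ln_div)
      finally show ?case .
    qed
  next
    show "entropy_density (exp 1) (D (\<mu>1 i)) (D (\<mu> i)) \<in> borel_measurable (D (\<mu> i))"
    proof -
      have "entropy_density (exp 1) (D (\<mu>1 i)) (D (\<mu> i)) \<in> borel_measurable (D (\<mu>1 i))"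
        by (rule measurable_entropy_density)
      then show ?thesis by (subst measurable_cong_sets[OF sD(1) refl]) (simp add: measurable_cong_sets[OF sD(2) refl])
    qed
    have "(\<lambda>x. - phi i x) \<in> borel_measurable borel" by measurable
    then show "(\<lambda>x. - phi i x) \<in> borel_measurable (D (\<mu> i))"
      using measurable_cong_sets[OF sD(1) refl] by blast
  qed
  finally show ?thesis by simp
qed

end


context bctx2 begin

definition psi :: "nat \<Rightarrow> real" where "psi i = (\<integral>x. phi i x \<partial>D (\<mu> i))"

definition arm :: "nat \<Rightarrow> real \<times> (nat \<times> nat \<Rightarrow> real) \<Rightarrow> nat" where "arm s \<omega> = \<pi> s (hist \<pi> s \<omega>)"
definition obs :: "nat \<Rightarrow> real \<times> (nat \<times> nat \<Rightarrow> real) \<Rightarrow> real" where "obs s \<omega> = snd \<omega> (s, arm s \<omega>)"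

lemma arm_in: "arm s \<omega> \<in> {1..L}" unfolding arm_def by (rule arms)

lemma m_arm0: "arm s \<in> BS0 L \<rightarrow>\<^sub>M count_space UNIV"
  unfolding arm_def by (rule measurable_compose[OF m_hist[OF pmeas] m_pi])

lemma m_obs0: "obs s \<in> borel_measurable (BS0 L)"
proof -
  have "(\<lambda>\<omega>. (\<lambda>k \<omega>. snd \<omega> (s, k)) (arm s \<omega>) \<omega>) \<in> borel_measurable (BS0 L)"
    by (rule measurable_compose_countable[OF m_comp m_arm0])
  then show ?thesis by (simp add: obs_def[abs_def])
qed

lemma m_arm: "arm s \<in> P \<rightarrow>\<^sub>M count_space UNIV" by (rule meas_B[OF okP m_arm0])
lemma m_obs: "obs s \<in> borel_measurable P" by (rule meas_B[OF okP m_obs0])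

lemma psi_bound: assumes i: "i \<in> {1..L}" shows "\<bar>psi i\<bar> \<le> Cb"
proof -
  have a: "\<mu> i \<in> I" using okP i by (auto simp: ok_def)
  interpret prob_space "D (\<mu> i)" by (rule D_prob[OF a])
  have "\<bar>psi i\<bar> \<le> (\<integral>x. \<bar>phi i x\<bar> \<partial>D (\<mu> i))" unfolding psi_def by (rule integral_abs_bound)
  also have "\<dots> \<le> (\<integral>x. Cb \<partial>D (\<mu> i))"
  proof (rule integral_mono)
    have sD: "sets (D (\<mu> i)) = sets borel" using a by (simp add: sets_D)
    have "(\<lambda>x. \<bar>phi i x\<bar>) \<in> borel_measurable borel" by measurable
    then have "(\<lambda>x. \<bar>phi i x\<bar>) \<in> borel_measurable (D (\<mu> i))" using measurable_cong_sets[OF sD refl] by blast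
    then show "integrable (D (\<mu> i)) (\<lambda>x. \<bar>phi i x\<bar>)"
      by (rule integrable_const_bound[where B=Cb, rotated]) (use phi_bound[OF i] in auto)
  qed (use phi_bound[OF i] in auto)
  also have "\<dots> = Cb" by (simp add: prob_space)
  finally show ?thesis .
qed

lemma nn1: "0 \<le> phi (arm s \<omega>) y + Cb" using phi_bound[OF arm_in, of s \<omega> y] by (simp add: abs_le_iff)
lemma nn2: "0 \<le> psi (arm s \<omega>) + Cb" using psi_bound[OF arm_in, of s \<omega>] by (simp add: abs_le_iff)

lemma inner_int:
  assumes i: "i \<in> {1..L}"
  shows "(\<integral>\<^sup>+y. ennreal (phi i y + Cb) \<partial>D (\<mu> i)) = ennreal (psi i + Cb)"
proof -
  have a: "\<mu> i \<in> I" using okP i by (auto simp: ok_def)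
  interpret prob_space "D (\<mu> i)" by (rule D_prob[OF a])
  have sD: "sets (D (\<mu> i)) = sets borel" using a by (simp add: sets_D)
  have "(\<lambda>x. phi i x) \<in> borel_measurable borel" by measurable
  then have m: "(\<lambda>x. phi i x) \<in> borel_measurable (D (\<mu> i))" using measurable_cong_sets[OF sD refl] by blast
  have int: "integrable (D (\<mu> i)) (\<lambda>x. phi i x)"
    by (rule integrable_const_bound[where B=Cb, OF _ m]) (use phi_bound[OF i] in auto)
  have "(\<integral>\<^sup>+y. ennreal (phi i y + Cb) \<partial>D (\<mu> i)) = ennreal (\<integral>y. phi i y + Cb \<partial>D (\<mu> i))"
  proof (rule nn_integral_eq_integral)
    show "integrable (D (\<mu> i)) (\<lambda>y. phi i y + Cb)" using int by simp
    have "0 \<le> phi i y + Cb" for y using phi_bound[OF i, of y] by (simp add: abs_le_iff)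
    then show "AE y in D (\<mu> i). 0 \<le> phi i y + Cb" by simp
  qed
  also have "(\<integral>y. phi i y + Cb \<partial>D (\<mu> i)) = psi i + Cb"
    using int by (simp add: psi_def prob_space)
  finally show ?thesis .
qed

lemma exp_step: "(\<integral>\<omega>. phi (arm s \<omega>) (obs s \<omega>) \<partial>P) = (\<integral>\<omega>. psi (arm s \<omega>) \<partial>P)"
proof -
  interpret PP: prob_space P by (rule prob_B[OF okP])
  define K where "K z = ennreal (phi (\<pi> s (fst z)) (snd z) + Cb)" for z :: "(real \<times> (nat \<Rightarrow> nat) \<times> (nat \<Rightarrow> real)) \<times> real"
  have mK: "K \<in> borel_measurable (HS \<Otimes>\<^sub>M borel)"
  proof -
    have "(\<lambda>z. (\<lambda>i z. ennreal (phi i (snd z) + Cb)) (\<pi> s (fst z)) z) \<in> borel_measurable (HS \<Otimes>\<^sub>M borel)"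
      by (rule measurable_compose_countable[where f="\<lambda>i z. ennreal (phi i (snd z) + Cb)"]) measurable
    then show ?thesis by (simp add: K_def[abs_def])
  qed
  have mpo: "(\<lambda>\<omega>. phi (arm s \<omega>) (obs s \<omega>)) \<in> borel_measurable P"
  proof -
    have "(\<lambda>\<omega>. (\<lambda>i \<omega>. phi i (obs s \<omega>)) (arm s \<omega>) \<omega>) \<in> borel_measurable P"
      by (rule measurable_compose_countable[OF _ m_arm]) (rule measurable_compose[OF m_obs m_phi])
    then show ?thesis by simp
  qed
  have mps: "(\<lambda>\<omega>. psi (arm s \<omega>)) \<in> borel_measurable P"
    by (rule measurable_compose[OF m_arm]) simp
  have int1: "integrable P (\<lambda>\<omega>. phi (arm s \<omega>) (obs s \<omega>))"
    by (rule PP.integrable_const_bound[where B=Cb, OF _ mpo]) (use phi_bound[OF arm_in] in auto)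
  have int2: "integrable P (\<lambda>\<omega>. psi (arm s \<omega>))"
    by (rule PP.integrable_const_bound[where B=Cb, OF _ mps]) (use psi_bound[OF arm_in] in auto)
  have "ennreal (\<integral>\<omega>. phi (arm s \<omega>) (obs s \<omega>) + Cb \<partial>P) = (\<integral>\<^sup>+\<omega>. ennreal (phi (arm s \<omega>) (obs s \<omega>) + Cb) \<partial>P)"
  proof (rule nn_integral_eq_integral[symmetric])
    show "integrable P (\<lambda>\<omega>. phi (arm s \<omega>) (obs s \<omega>) + Cb)" using int1 by simp
    have "0 \<le> phi (arm s \<omega>) (obs s \<omega>) + Cb" for \<omega> using phi_bound[OF arm_in, of s \<omega> "obs s \<omega>"] by (simp add: abs_le_iff)
    then show "AE \<omega> in P. 0 \<le> phi (arm s \<omega>) (obs s \<omega>) + Cb" by simp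
  qed
  also have "\<dots> = (\<integral>\<^sup>+\<omega>. K (hist \<pi> s \<omega>, snd \<omega> (s, \<pi> s (hist \<pi> s \<omega>))) \<partial>P)"
    by (simp add: K_def arm_def obs_def)
  also have "\<dots> = (\<integral>\<^sup>+\<omega>. (\<integral>\<^sup>+y. K (hist \<pi> s \<omega>, y) \<partial>D (\<mu> (\<pi> s (hist \<pi> s \<omega>)))) \<partial>P)"
    by (rule key[OF okP mK])
  also have "\<dots> = (\<integral>\<^sup>+\<omega>. ennreal (psi (arm s \<omega>) + Cb) \<partial>P)"
    by (rule nn_integral_cong) (simp add: K_def inner_int[OF arm_in[unfolded arm_def]] arm_def)
  also have "\<dots> = ennreal (\<integral>\<omega>. psi (arm s \<omega>) + Cb \<partial>P)"
  proof (rule nn_integral_eq_integral)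
    show "integrable P (\<lambda>\<omega>. psi (arm s \<omega>) + Cb)" using int2 by simp
    have "0 \<le> psi (arm s \<omega>) + Cb" for \<omega> using psi_bound[OF arm_in, of s \<omega>] by (simp add: abs_le_iff)
    then show "AE \<omega> in P. 0 \<le> psi (arm s \<omega>) + Cb" by simp
  qed
  finally have "(\<integral>\<omega>. phi (arm s \<omega>) (obs s \<omega>) + Cb \<partial>P) = (\<integral>\<omega>. psi (arm s \<omega>) + Cb \<partial>P)"
  proof (subst (asm) ennreal_inj)
    show "0 \<le> (\<integral>\<omega>. phi (arm s \<omega>) (obs s \<omega>) + Cb \<partial>P)"
      by (rule integral_nonneg_AE) (simp add: nn1)
    show "0 \<le> (\<integral>\<omega>. psi (arm s \<omega>) + Cb \<partial>P)"
      by (rule integral_nonneg_AE) (simp add: nn2)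
  qed
  then show ?thesis using int1 int2 by (simp add: PP.prob_space)
qed

end


definition kl :: "real \<Rightarrow> real \<Rightarrow> real" where
  "kl p q = p * ln (p / q) + (1 - p) * ln ((1 - p) / (1 - q))"

lemma xlnx_tangent:
  fixes x x0 :: real
  assumes x: "0 \<le> x" and x0: "0 < x0"
  shows "x0 * ln x0 + (ln x0 + 1) * (x - x0) \<le> x * ln x"
proof (cases "x = 0")
  case True then show ?thesis using x0 by (simp add: algebra_simps)
next
  case False
  then have xp: "0 < x" using x by simp
  have "ln (x0 / x) \<le> x0 / x - 1" by (rule ln_le_minus_one) (use xp x0 in simp)
  then have "ln x0 - ln x \<le> x0 / x - 1" using xp x0 by (simp add: ln_div)
  then have "x * (ln x0 - ln x) \<le> x * (x0 / x - 1)" using xp by (intro mult_left_mono) auto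
  then have "x * ln x0 - x * ln x \<le> x0 - x" using xp by (simp add: algebra_simps)
  then show ?thesis by (simp add: algebra_simps)
qed

lemma ln_tangent:
  fixes y y0 :: real
  assumes "0 < y" "0 < y0"
  shows "ln y \<le> ln y0 + (y - y0) / y0"
proof -
  have "ln (y / y0) \<le> y / y0 - 1" by (rule ln_le_minus_one) (use assms in simp)
  then show ?thesis using assms by (simp add: ln_div diff_divide_distrib)
qed

definition gfun :: "real \<Rightarrow> real" where
  "gfun d = (1 - 2 * d) * ln (1 - d) + 2 * d * ln d + ln (12 / 5)"

lemma gfun_tangent:
  fixes d d0 :: real
  assumes d: "0 < d" "d < 1" and d0: "0 < d0" "d0 < 1"
  shows "gfun d0 + (d - d0) * (2 * (ln d0 - ln (1 - d0)) + 1 / (1 - d0)) \<le> gfun d"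
proof -
  have t1: "d0 * ln d0 + (ln d0 + 1) * (d - d0) \<le> d * ln d" by (rule xlnx_tangent) (use d d0 in auto)
  have t2: "(1 - d0) * ln (1 - d0) + (ln (1 - d0) + 1) * ((1 - d) - (1 - d0)) \<le> (1 - d) * ln (1 - d)"
    by (rule xlnx_tangent) (use d d0 in auto)
  have t3: "ln (1 - d) \<le> ln (1 - d0) + ((1 - d) - (1 - d0)) / (1 - d0)" by (rule ln_tangent) (use d d0 in auto)
  have e: "(1 - 2 * x) * ln (1 - x) = 2 * ((1 - x) * ln (1 - x)) - ln (1 - x)" for x :: real by (simp add: algebra_simps)
  have "(d - d0) * (1 / (1 - d0)) = - (((1 - d) - (1 - d0)) / (1 - d0))" using d0 by (simp add: field_simps)
  then show ?thesis unfolding gfun_def e using t1 t2 t3 by (simp add: algebra_simps)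
qed

lemma exp_upper: fixes x :: real assumes "0 \<le> x" "x < 1" shows "exp x \<le> 1 / (1 - x)"
proof -
  have "1 + (- x) \<le> exp (- x)" by (rule exp_ge_add_one_self)
  then have "1 - x \<le> inverse (exp x)" by (simp add: exp_minus)
  then show ?thesis using assms by (simp add: field_simps)
qed

lemma exp_pow: "exp (real n * x) = exp x ^ n" by (simp add: exp_of_nat_mult)

lemma N1: "5 / 7 < ln (7 / 3 :: real)"
proof -
  have "exp (5 / 28 :: real) \<le> 28 / 23" using exp_upper[of "5/28"] by simp
  then have "exp (5 / 28 :: real) ^ 4 \<le> (28 / 23) ^ 4" by (intro power_mono) auto
  moreover have "exp (5 / 28 :: real) ^ 4 = exp (5/7)"
  proof -
    have e: "exp (real 4 * (5/28::real)) = exp (5/28) ^ 4" by (rule exp_pow)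
    have "real 4 * (5/28::real) = 5/7" by simp
    then show ?thesis using e by simp
  qed
  ultimately have "exp (5 / 7 :: real) \<le> (28 / 23) ^ 4" by simp
  also have "\<dots> < 7 / 3" by (simp add: eval_nat_numeral)
  finally have "exp (5 / 7 :: real) < 7 / 3" .
  then show ?thesis by (metis exp_gt_zero ln_exp ln_less_cancel_iff zero_less_divide_iff zero_less_numeral)
qed

lemma N2: "ln (2::real) < 3 / 4"
proof -
  have "(35 / 32 :: real) \<le> exp (3 / 32)" using exp_ge_add_one_self[of "3/32::real"] by simp
  then have "(35 / 32 :: real) ^ 8 \<le> exp (3 / 32) ^ 8" by (intro power_mono) auto
  moreover have "exp (3 / 32 :: real) ^ 8 = exp (3/4)"
  proof -
    have e: "exp (real 8 * (3/32::real)) = exp (3/32) ^ 8" by (rule exp_pow)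
    have "real 8 * (3/32::real) = 3/4" by simp
    then show ?thesis using e by simp
  qed
  ultimately have "(35 / 32 :: real) ^ 8 \<le> exp (3 / 4)" by simp
  moreover have "(2::real) < (35/32)^8" by (simp add: eval_nat_numeral)
  ultimately have "2 < exp (3 / 4 :: real)" by linarith
  then show ?thesis by (metis exp_gt_zero ln_exp ln_less_cancel_iff zero_less_numeral)
qed

lemma N3: "3 / 4 \<le> ln ((128 / 125) ^ 5 * (2::real))"
proof -
  have "exp (3 / 32 :: real) \<le> 32 / 29" using exp_upper[of "3/32"] by simp
  then have "exp (3 / 32 :: real) ^ 8 \<le> (32 / 29) ^ 8" by (intro power_mono) auto
  moreover have "exp (3 / 32 :: real) ^ 8 = exp (3/4)"
  proof -
    have e: "exp (real 8 * (3/32::real)) = exp (3/32) ^ 8" by (rule exp_pow)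
    have "real 8 * (3/32::real) = 3/4" by simp
    then show ?thesis using e by simp
  qed
  ultimately have "exp (3 / 4 :: real) \<le> (32 / 29) ^ 8" by simp
  also have "\<dots> \<le> (128 / 125) ^ 5 * 2" by (simp add: eval_nat_numeral)
  finally show ?thesis by (metis exp_gt_zero ln_exp ln_le_cancel_iff zero_less_mult_iff zero_less_numeral zero_less_divide_iff zero_less_power)
qed

lemma gfun_03: "0 < gfun (3/10)"
proof -
  have "5 * gfun (3/10) = 2 * ln (7/10) + 3 * ln (3/10) + 5 * ln (12/5)"
    by (simp add: gfun_def algebra_simps)
  also have "\<dots> = ln ((7/10) ^ 2 * (3/10) ^ 3 * (12/5) ^ 5)"
    by (simp add: ln_mult ln_realpow)
  also have "\<dots> > 0" by (simp add: eval_nat_numeral)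
  finally show ?thesis by simp
qed

lemma gfun_13: "3 * gfun (1/3) = ln (128 / 125)"
proof -
  have "3 * gfun (1/3) = ln (2/3) + 2 * ln (1/3) + 3 * ln (12/5)"
    by (simp add: gfun_def algebra_simps)
  also have "\<dots> = ln ((2/3) * (1/3) ^ 2 * (12/5) ^ 3)"
    by (simp add: ln_mult ln_realpow ln_div)
  also have "(2/3) * (1/3) ^ 2 * (12/5) ^ 3 = (128 / 125 :: real)" by (simp add: eval_nat_numeral)
  finally show ?thesis .
qed

lemma gfun_nonneg:
  assumes d: "0 < d" "d < 5 / 12"
  shows "0 \<le> gfun d"
proof -
  have d1: "d < 1" using d by simp
  consider "d \<le> 3/10" | "3/10 \<le> d" "d \<le> 1/3" | "1/3 \<le> d" by linarith
  then show ?thesis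
  proof cases
    case 1
    have "gfun (3/10) + (d - 3/10) * (2 * (ln (3/10) - ln (1 - 3/10)) + 1 / (1 - 3/10)) \<le> gfun d"
      by (rule gfun_tangent) (use d d1 in auto)
    moreover have "2 * (ln (3/10) - ln (1 - 3/10)) + 1 / (1 - 3/10) < (0::real)"
    proof -
      have "ln (3/10) - ln (7/10) = - ln (7/3 :: real)" by (simp add: ln_div)
      then show ?thesis using N1 by simp
    qed
    moreover have "(d - 3/10) \<le> 0" using 1 by simp
    ultimately show ?thesis using gfun_03 by (smt (verit) mult_nonpos_nonpos)
  next
    case 2
    have tan: "gfun (1/3) + (d - 1/3) * (2 * (ln (1/3) - ln (1 - 1/3)) + 1 / (1 - 1/3)) \<le> gfun d"
      by (rule gfun_tangent) (use d d1 in auto)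
    have sl: "2 * (ln (1/3) - ln (1 - 1/3)) + 1 / (1 - 1/3) = 3/2 - 2 * ln (2::real)"
    proof -
      have "ln (1/3) - ln (2/3) = - ln (2 :: real)" by (simp add: ln_div)
      then show ?thesis by simp
    qed
    have slpos: "0 \<le> 3/2 - 2 * ln (2::real)" using N2 by simp
    have "(d - 1/3) * (3/2 - 2 * ln 2) \<ge> (- 1/30) * (3/2 - 2 * ln (2::real))"
      using 2 slpos by (intro mult_right_mono) auto
    moreover have "gfun (1/3) + (- 1/30) * (3/2 - 2 * ln (2::real)) \<ge> 0"
    proof -
      have "ln ((128 / 125) ^ 5 * (2::real)) = 5 * ln (128/125) + ln 2" by (simp add: ln_mult ln_realpow)
      then show ?thesis using N3 gfun_13 by simp
    qed
    ultimately show ?thesis using tan unfolding sl by linarith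
  next
    case 3
    have tan: "gfun (1/3) + (d - 1/3) * (2 * (ln (1/3) - ln (1 - 1/3)) + 1 / (1 - 1/3)) \<le> gfun d"
      by (rule gfun_tangent) (use d d1 in auto)
    have sl: "2 * (ln (1/3) - ln (1 - 1/3)) + 1 / (1 - 1/3) = 3/2 - 2 * ln (2::real)"
    proof -
      have "ln (1/3) - ln (2/3) = - ln (2 :: real)" by (simp add: ln_div)
      then show ?thesis by simp
    qed
    have slpos: "0 \<le> 3/2 - 2 * ln (2::real)" using N2 by simp
    have "(d - 1/3) * (3/2 - 2 * ln 2) \<ge> 0" using 3 slpos by simp
    moreover have "gfun (1/3) \<ge> 0"
    proof -
      have "0 \<le> ln (128 / 125 :: real)" by simp
      then show ?thesis using gfun_13 by linarith
    qed
    ultimately show ?thesis using tan unfolding sl by linarith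
  qed
qed

lemma kl_expand:
  assumes p: "0 < p" "p \<le> 1" and q: "0 < q" "q < 1"
  shows "kl p q = p * ln p - p * ln q + (1 - p) * ln (1 - p) - (1 - p) * ln (1 - q)"
proof (cases "p = 1")
  case True then show ?thesis using q by (simp add: kl_def ln_div)
next
  case False
  then have "p < 1" using p by simp
  then show ?thesis using p q by (simp add: kl_def ln_div algebra_simps)
qed

lemma kl_lower:
  fixes d p q :: real
  assumes d: "0 < d" "d < 5 / 12" and p: "1 - d \<le> p" "p \<le> 1" and q: "0 < q" "q \<le> d"
  shows "- ln (12 / 5 * d) \<le> kl p q"
proof -
  have d1: "d < 1/2" using d by simp
  have pp: "0 < p" using p d1 by simp
  have q1: "q < 1" using q d1 by simp
  have s1: "kl p d \<le> kl p q"
  proof -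
    have a: "1 - q / d \<le> ln (d / q)"
    proof -
      have "ln (q / d) \<le> q / d - 1" by (rule ln_le_minus_one) (use q d in simp)
      moreover have "ln (d / q) = - ln (q / d)" using q d by (simp add: ln_div)
      ultimately show ?thesis by simp
    qed
    have b: "1 - (1 - q) / (1 - d) \<le> ln ((1 - d) / (1 - q))"
    proof -
      have "ln ((1 - q) / (1 - d)) \<le> (1 - q) / (1 - d) - 1" by (rule ln_le_minus_one) (use q1 d1 in simp)
      moreover have "ln ((1 - d) / (1 - q)) = - ln ((1 - q) / (1 - d))" using q1 d1 by (simp add: ln_div)
      ultimately show ?thesis by simp
    qed
    have diff: "kl p q - kl p d = p * ln (d / q) + (1 - p) * ln ((1 - d) / (1 - q))"
      using kl_expand[OF pp p(2) q(1) q1] kl_expand[OF pp p(2) d(1)] d1 q q1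
      by (simp add: ln_div algebra_simps)
    have "p * (1 - q / d) + (1 - p) * (1 - (1 - q) / (1 - d)) \<le> p * ln (d / q) + (1 - p) * ln ((1 - d) / (1 - q))"
      using a b pp p(2) by (intro add_mono mult_left_mono) auto
    moreover have "p * (1 - q / d) + (1 - p) * (1 - (1 - q) / (1 - d)) = (d - q) * (p / d - (1 - p) / (1 - d))"
      using d d1 by (simp add: field_simps)
    moreover have "0 \<le> (d - q) * (p / d - (1 - p) / (1 - d))"
    proof -
      have "1 \<le> p / d" using p d d1 by (simp add: field_simps)
      moreover have "(1 - p) / (1 - d) \<le> 1" using p d d1 by (simp add: field_simps)
      ultimately have "0 \<le> p / d - (1 - p) / (1 - d)" by linarith
      then show ?thesis using q by (intro mult_nonneg_nonneg) auto
    qed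
    ultimately show ?thesis using diff by linarith
  qed
  have s2: "kl (1 - d) d \<le> kl p d"
  proof -
    have e1: "kl p d = p * ln p - p * ln d + (1 - p) * ln (1 - p) - (1 - p) * ln (1 - d)"
      by (rule kl_expand) (use pp p d d1 in auto)
    have e2: "kl (1 - d) d = (1 - d) * ln (1 - d) - (1 - d) * ln d + d * ln d - d * ln (1 - d)"
      using kl_expand[of "1 - d" d] d d1 by simp
    have t1: "(1 - d) * ln (1 - d) + (ln (1 - d) + 1) * (p - (1 - d)) \<le> p * ln p"
      by (rule xlnx_tangent) (use pp d1 in auto)
    have t2: "d * ln d + (ln d + 1) * ((1 - p) - d) \<le> (1 - p) * ln (1 - p)"
      by (rule xlnx_tangent) (use p d in auto)
    have mono: "ln d \<le> ln (1 - d)" using d d1 by simp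
    have "0 \<le> (p - (1 - d)) * (ln (1 - d) - ln d)" using p mono by simp
    then show ?thesis unfolding e1 e2 using t1 t2 by (simp add: algebra_simps)
  qed
  have s3: "- ln (12 / 5 * d) \<le> kl (1 - d) d"
  proof -
    have e2: "kl (1 - d) d = (1 - d) * ln (1 - d) - (1 - d) * ln d + d * ln d - d * ln (1 - d)"
      using kl_expand[of "1 - d" d] d d1 by simp
    have "ln (12 / 5 * d) = ln (12 / 5) + ln d" using d by (intro ln_mult_pos) auto
    moreover have "0 \<le> gfun d" by (rule gfun_nonneg[OF d])
    ultimately show ?thesis unfolding e2 gfun_def by (simp add: algebra_simps)
  qed
  show ?thesis using s1 s2 s3 by linarith
qed



context bctx2 begin

lemma m_po: "(\<lambda>\<omega>. phi (arm s \<omega>) (obs s \<omega>)) \<in> borel_measurable P"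
proof -
  have "(\<lambda>\<omega>. (\<lambda>i \<omega>. phi i (obs s \<omega>)) (arm s \<omega>) \<omega>) \<in> borel_measurable P"
    by (rule measurable_compose_countable[OF _ m_arm]) (rule measurable_compose[OF m_obs m_phi])
  then show ?thesis by simp
qed

definition Lsum :: "nat \<Rightarrow> real \<times> (nat \<times> nat \<Rightarrow> real) \<Rightarrow> real" where
  "Lsum n \<omega> = (\<Sum>s<n. phi (arm s \<omega>) (obs s \<omega>))"

lemma m_Lsum[measurable]: "Lsum n \<in> borel_measurable P"
  unfolding Lsum_def by (intro borel_measurable_sum m_po)

lemma Lsum_bound: "\<bar>Lsum n \<omega>\<bar> \<le> real n * Cb"
proof -
  have "\<bar>Lsum n \<omega>\<bar> \<le> (\<Sum>s<n. \<bar>phi (arm s \<omega>) (obs s \<omega>)\<bar>)" unfolding Lsum_def by (rule sum_abs)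
  also have "\<dots> \<le> (\<Sum>s<n. Cb)" by (intro sum_mono phi_bound arm_in)
  finally show ?thesis by simp
qed

lemma lam_hist: "lam n (hist \<pi> n \<omega>) = ennreal (exp (Lsum n \<omega>))"
proof -
  have "lam n (hist \<pi> n \<omega>) = (\<Prod>s<n. ennreal (exp (phi (arm s \<omega>) (obs s \<omega>))))"
    unfolding lam_def by (rule prod.cong) (auto simp: hist_A hist_X arm_def obs_def lr_phi)
  also have "\<dots> = ennreal (\<Prod>s<n. exp (phi (arm s \<omega>) (obs s \<omega>)))"
    by (rule prod_ennreal) simp
  also have "\<dots> = ennreal (exp (Lsum n \<omega>))" by (simp add: Lsum_def exp_sum)
  finally show ?thesis .
qed

lemma int_Lsum_lower:
  assumes M: "\<forall>i\<in>{1..L}. Dkl (D (\<mu> i)) (D (\<mu>1 i)) \<le> M"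
  shows "(\<integral>\<omega>. Lsum n \<omega> \<partial>P) \<ge> - (real n * M)"
proof -
  interpret PP: prob_space P by (rule prob_B[OF okP])
  have int: "integrable P (\<lambda>\<omega>. phi (arm s \<omega>) (obs s \<omega>))" for s
    by (rule PP.integrable_const_bound[where B=Cb, OF _ m_po]) (use phi_bound[OF arm_in] in auto)
  have mps: "(\<lambda>\<omega>. psi (arm s \<omega>)) \<in> borel_measurable P" for s
    by (rule measurable_compose[OF m_arm]) simp
  have int2: "integrable P (\<lambda>\<omega>. psi (arm s \<omega>))" for s
    by (rule PP.integrable_const_bound[where B=Cb, OF _ mps]) (use psi_bound[OF arm_in] in auto)
  have psiM: "psi (arm s \<omega>) \<ge> - M" for s \<omega>
  proof -
    have "Dkl (D (\<mu> (arm s \<omega>))) (D (\<mu>1 (arm s \<omega>))) \<le> M" using M arm_in[of s \<omega>] by blast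
    then show ?thesis using Dkl_eq[OF arm_in[of s \<omega>]] by (simp add: psi_def)
  qed
  have "(\<integral>\<omega>. Lsum n \<omega> \<partial>P) = (\<Sum>s<n. \<integral>\<omega>. phi (arm s \<omega>) (obs s \<omega>) \<partial>P)"
    unfolding Lsum_def by (subst Bochner_Integration.integral_sum) (simp_all add: int)
  also have "\<dots> = (\<Sum>s<n. \<integral>\<omega>. psi (arm s \<omega>) \<partial>P)" by (simp add: exp_step)
  also have "\<dots> \<ge> (\<Sum>s<n. \<integral>\<omega>. - M \<partial>P)"
    by (intro sum_mono integral_mono int2 psiM) simp
  finally show ?thesis by (simp add: PP.prob_space)
qed

lemma F_sets:
  assumes Psi: "Measurable.pred HS \<Psi>" and that: "ok \<mu>'"
  shows "{\<omega> \<in> space (bandit_space D L \<mu>'). \<Psi> (hist \<pi> n \<omega>)} \<in> sets (bandit_space D L \<mu>')"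
proof -
  have "Measurable.pred (bandit_space D L \<mu>') (\<lambda>\<omega>. \<Psi> (hist \<pi> n \<omega>))"
    by (rule measurable_compose[OF meas_B[OF that m_hist[OF pmeas]] Psi])
  then show ?thesis by (simp add: pred_def)
qed

lemma QF:
  assumes Psi: "Measurable.pred HS \<Psi>"
  shows "measure Q {\<omega> \<in> space Q. \<Psi> (hist \<pi> n \<omega>)} = (\<integral>\<omega>. indicator {\<omega> \<in> space P. \<Psi> (hist \<pi> n \<omega>)} \<omega> * exp (Lsum n \<omega>) \<partial>P)"
proof -
  interpret PP: prob_space P by (rule prob_B[OF okP])
  interpret QQ: prob_space Q by (rule prob_B[OF okQ])
  define F where "F = {\<omega> \<in> space P. \<Psi> (hist \<pi> n \<omega>)}"
  have spQ: "space Q = space P" using space_B[OF okP] space_B[OF okQ] by simp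
  have FQ: "{\<omega> \<in> space Q. \<Psi> (hist \<pi> n \<omega>)} = F" by (simp add: F_def spQ)
  have FsQ: "F \<in> sets Q" using F_sets[OF Psi okQ, of n] FQ by simp
  have FsP: "F \<in> sets P" using F_sets[OF Psi okP] by (simp add: F_def)
  have mG: "(\<lambda>h. indicator {h. \<Psi> h} h :: ennreal) \<in> borel_measurable HS"
    using Psi by measurable
  have mI: "(\<lambda>\<omega>. indicator F \<omega> * exp (Lsum n \<omega>)) \<in> borel_measurable P"
    using FsP by measurable
  have bnd: "\<bar>indicator F \<omega> * exp (Lsum n \<omega>)\<bar> \<le> exp (real n * Cb)" for \<omega>
  proof -
    have "exp (Lsum n \<omega>) \<le> exp (real n * Cb)" using Lsum_bound[of n \<omega>] by (simp add: abs_le_iff)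
    then show ?thesis by (auto simp: indicator_def)
  qed
  have int: "integrable P (\<lambda>\<omega>. indicator F \<omega> * exp (Lsum n \<omega>))"
    by (rule PP.integrable_const_bound[where B="exp (real n * Cb)", OF _ mI]) (use bnd in auto)
  have "ennreal (measure Q F) = emeasure Q F" using QQ.emeasure_eq_measure by simp
  also have "\<dots> = (\<integral>\<^sup>+\<omega>. indicator {h. \<Psi> h} (hist \<pi> n \<omega>) \<partial>Q)"
    by (subst nn_integral_indicator[OF FsQ, symmetric]) (auto intro!: nn_integral_cong simp: F_def spQ indicator_def)
  also have "\<dots> = (\<integral>\<^sup>+\<omega>. indicator {h. \<Psi> h} (hist \<pi> n \<omega>) * lam n (hist \<pi> n \<omega>) \<partial>P)"
    by (rule change[OF mG])
  also have "\<dots> = (\<integral>\<^sup>+\<omega>. ennreal (indicator F \<omega> * exp (Lsum n \<omega>)) \<partial>P)"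
    by (rule nn_integral_cong) (auto simp: lam_hist F_def indicator_def)
  also have "\<dots> = ennreal (\<integral>\<omega>. indicator F \<omega> * exp (Lsum n \<omega>) \<partial>P)"
    by (rule nn_integral_eq_integral[OF int]) simp
  finally have "ennreal (measure Q F) = ennreal (\<integral>\<omega>. indicator F \<omega> * exp (Lsum n \<omega>) \<partial>P)" .
  then have "measure Q F = (\<integral>\<omega>. indicator F \<omega> * exp (Lsum n \<omega>) \<partial>P)"
    by (subst (asm) ennreal_inj) (auto intro!: integral_nonneg_AE)
  then show ?thesis using FQ by (simp add: F_def)
qed

end


context bctx2 begin

lemma piece:
  assumes Psi: "Measurable.pred HS \<Psi>"
  shows "(\<integral>\<omega>. indicator {\<omega> \<in> space P. \<Psi> (hist \<pi> n \<omega>)} \<omega> * Lsum n \<omega> \<partial>P)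
     \<le> - measure P {\<omega> \<in> space P. \<Psi> (hist \<pi> n \<omega>)} * ln (measure P {\<omega> \<in> space P. \<Psi> (hist \<pi> n \<omega>)} / measure Q {\<omega> \<in> space Q. \<Psi> (hist \<pi> n \<omega>)})"
proof -
  interpret PP: prob_space P by (rule prob_B[OF okP])
  define F where "F = {\<omega> \<in> space P. \<Psi> (hist \<pi> n \<omega>)}"
  have FsP: "F \<in> sets P" using F_sets[OF Psi okP] by (simp add: F_def)
  define a where "a = measure P F"
  define b where "b = measure Q {\<omega> \<in> space Q. \<Psi> (hist \<pi> n \<omega>)}"
  have b_eq: "b = (\<integral>\<omega>. indicator F \<omega> * exp (Lsum n \<omega>) \<partial>P)" unfolding b_def F_def by (rule QF[OF Psi])
  have mI: "(\<lambda>\<omega>. indicator F \<omega> * exp (Lsum n \<omega>)) \<in> borel_measurable P" using FsP by measurable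
  have mL: "(\<lambda>\<omega>. indicator F \<omega> * Lsum n \<omega>) \<in> borel_measurable P" using FsP by measurable
  have mF: "(\<lambda>\<omega>. indicator F \<omega> :: real) \<in> borel_measurable P" using FsP by measurable
  have bnd1: "\<bar>indicator F \<omega> * exp (Lsum n \<omega>)\<bar> \<le> exp (real n * Cb)" for \<omega>
  proof -
    have "exp (Lsum n \<omega>) \<le> exp (real n * Cb)" using Lsum_bound[of n \<omega>] by (simp add: abs_le_iff)
    then show ?thesis by (auto simp: indicator_def)
  qed
  have bnd2: "\<bar>indicator F \<omega> * Lsum n \<omega>\<bar> \<le> real n * Cb" for \<omega>
    using Lsum_bound[of n \<omega>] Cb_nonneg by (auto simp: indicator_def)
  have intE: "integrable P (\<lambda>\<omega>. indicator F \<omega> * exp (Lsum n \<omega>))"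
    by (rule PP.integrable_const_bound[where B="exp (real n * Cb)", OF _ mI]) (use bnd1 in auto)
  have intL: "integrable P (\<lambda>\<omega>. indicator F \<omega> * Lsum n \<omega>)"
    by (rule PP.integrable_const_bound[where B="real n * Cb", OF _ mL]) (use bnd2 in auto)
  have intF: "integrable P (\<lambda>\<omega>. indicator F \<omega> :: real)"
    by (rule PP.integrable_const_bound[where B=1, OF _ mF]) (auto simp: indicator_def)
  have intFc: "(\<integral>\<omega>. indicator F \<omega> * c \<partial>P) = a * c" for c
    using FsP by (simp add: a_def)
  show ?thesis
  proof (cases "a = 0")
    case True
    have "(\<integral>\<omega>. indicator F \<omega> * Lsum n \<omega> \<partial>P) \<le> (\<integral>\<omega>. indicator F \<omega> * (real n * Cb) \<partial>P)"
      by (rule integral_mono[OF intL]) (use intF Lsum_bound in \<open>auto simp: indicator_def abs_le_iff\<close>)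
    also have "\<dots> = 0" unfolding intFc using True by simp
    finally show ?thesis using True by (simp add: F_def[symmetric] a_def)
  next
    case False
    then have apos: "a > 0" using measure_nonneg[of P F] unfolding a_def by linarith
    have bpos: "b > 0"
    proof (rule ccontr)
      assume "\<not> b > 0"
      moreover have "b \<ge> 0" unfolding b_eq by (rule integral_nonneg_AE) (simp add: indicator_def)
      ultimately have "(\<integral>\<omega>. indicator F \<omega> * exp (Lsum n \<omega>) \<partial>P) = 0" using b_eq by linarith
      then have "AE \<omega> in P. indicator F \<omega> * exp (Lsum n \<omega>) = 0"
        using integral_nonneg_eq_0_iff_AE[OF intE] by (simp add: indicator_def)
      then have "AE \<omega> in P. \<omega> \<notin> F" by eventually_elim (auto simp: indicator_def)
      then have "emeasure P F = 0"
        using AE_iff_measurable[OF FsP, of "\<lambda>\<omega>. \<omega> \<notin> F"] FsP[THEN sets.sets_into_space] by auto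
      then have "a = 0" by (simp add: a_def measure_def)
      then show False using apos by simp
    qed
    have pw: "indicator F \<omega> * Lsum n \<omega> \<le> indicator F \<omega> * (ln (b / a) - 1) + a / b * (indicator F \<omega> * exp (Lsum n \<omega>))" for \<omega>
    proof (cases "\<omega> \<in> F")
      case True
      have t: "0 < a / b * exp (Lsum n \<omega>)" using apos bpos by simp
      have "ln (a / b * exp (Lsum n \<omega>)) \<le> a / b * exp (Lsum n \<omega>) - 1" by (rule ln_le_minus_one[OF t])
      moreover have "ln (a / b * exp (Lsum n \<omega>)) = ln a - ln b + Lsum n \<omega>"
        using apos bpos by (simp add: ln_mult ln_div)
      moreover have "ln (b / a) = ln b - ln a" using apos bpos by (simp add: ln_div)
      ultimately show ?thesis using True by simp
    qed simp
    have "(\<integral>\<omega>. indicator F \<omega> * Lsum n \<omega> \<partial>P) \<le> (\<integral>\<omega>. indicator F \<omega> * (ln (b / a) - 1) + a / b * (indicator F \<omega> * exp (Lsum n \<omega>)) \<partial>P)"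
      by (rule integral_mono[OF intL _ pw]) (use intF intE in simp)
    also have "\<dots> = (\<integral>\<omega>. indicator F \<omega> * (ln (b / a) - 1) \<partial>P) + a / b * (\<integral>\<omega>. indicator F \<omega> * exp (Lsum n \<omega>) \<partial>P)"
    proof (subst Bochner_Integration.integral_add)
      show "integrable P (\<lambda>\<omega>. indicator F \<omega> * (ln (b / a) - 1))" using intF by simp
      show "integrable P (\<lambda>\<omega>. a / b * (indicator F \<omega> * exp (Lsum n \<omega>)))" using intE by simp
    qed simp
    also have "\<dots> = a * (ln (b / a) - 1) + a / b * b"
      unfolding intFc b_eq[symmetric] ..
    also have "\<dots> = - a * ln (a / b)" using apos bpos by (simp add: ln_div algebra_simps)
    finally show ?thesis by (simp add: a_def b_def F_def)
  qed
qed

lemma core: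
  assumes Psi: "Measurable.pred HS \<Psi>"
    and M: "\<forall>i\<in>{1..L}. Dkl (D (\<mu> i)) (D (\<mu>1 i)) \<le> M"
  shows "kl (measure P {\<omega> \<in> space P. \<Psi> (hist \<pi> n \<omega>)}) (measure Q {\<omega> \<in> space Q. \<Psi> (hist \<pi> n \<omega>)}) \<le> real n * M"
proof -
  interpret PP: prob_space P by (rule prob_B[OF okP])
  interpret QQ: prob_space Q by (rule prob_B[OF okQ])
  have Psic: "Measurable.pred HS (\<lambda>h. \<not> \<Psi> h)" using Psi by measurable
  define F where "F = {\<omega> \<in> space P. \<Psi> (hist \<pi> n \<omega>)}"
  define Fc where "Fc = {\<omega> \<in> space P. \<not> \<Psi> (hist \<pi> n \<omega>)}"
  have spQ: "space Q = space P" using space_B[OF okP] space_B[OF okQ] by simp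
  have FsP: "F \<in> sets P" using F_sets[OF Psi okP] by (simp add: F_def)
  have FsQ: "F \<in> sets Q" using F_sets[OF Psi okQ, of n] by (simp add: F_def spQ)
  have Fc_eq: "Fc = space P - F" by (auto simp: F_def Fc_def)
  have pc: "measure P Fc = 1 - measure P F" unfolding Fc_eq by (rule PP.prob_compl[OF FsP])
  have qc: "measure Q Fc = 1 - measure Q F" unfolding Fc_eq spQ[symmetric] by (rule QQ.prob_compl[OF FsQ])
  have FQ: "{\<omega> \<in> space Q. \<Psi> (hist \<pi> n \<omega>)} = F" by (simp add: F_def spQ)
  have FcQ: "{\<omega> \<in> space Q. \<not> \<Psi> (hist \<pi> n \<omega>)} = Fc" by (simp add: Fc_def spQ)
  have FcsP: "Fc \<in> sets P" using F_sets[OF Psic okP] by (simp add: Fc_def)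
  have p1: "(\<integral>\<omega>. indicator F \<omega> * Lsum n \<omega> \<partial>P) \<le> - measure P F * ln (measure P F / measure Q F)"
    using piece[OF Psi, of n] by (simp add: F_def[symmetric] FQ)
  have p2: "(\<integral>\<omega>. indicator Fc \<omega> * Lsum n \<omega> \<partial>P) \<le> - measure P Fc * ln (measure P Fc / measure Q Fc)"
    using piece[OF Psic, of n] by (simp add: Fc_def[symmetric] FcQ)
  have mL1: "(\<lambda>\<omega>. indicator F \<omega> * Lsum n \<omega>) \<in> borel_measurable P" using FsP by measurable
  have mL2: "(\<lambda>\<omega>. indicator Fc \<omega> * Lsum n \<omega>) \<in> borel_measurable P" using FcsP by measurable
  have int1: "integrable P (\<lambda>\<omega>. indicator F \<omega> * Lsum n \<omega>)"
    by (rule PP.integrable_const_bound[where B="real n * Cb", OF _ mL1])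
       (use Lsum_bound Cb_nonneg in \<open>auto simp: indicator_def\<close>)
  have int2: "integrable P (\<lambda>\<omega>. indicator Fc \<omega> * Lsum n \<omega>)"
    by (rule PP.integrable_const_bound[where B="real n * Cb", OF _ mL2])
       (use Lsum_bound Cb_nonneg in \<open>auto simp: indicator_def\<close>)
  have "(\<integral>\<omega>. Lsum n \<omega> \<partial>P) = (\<integral>\<omega>. indicator F \<omega> * Lsum n \<omega> + indicator Fc \<omega> * Lsum n \<omega> \<partial>P)"
    by (rule Bochner_Integration.integral_cong) (auto simp: F_def Fc_def indicator_def)
  also have "\<dots> = (\<integral>\<omega>. indicator F \<omega> * Lsum n \<omega> \<partial>P) + (\<integral>\<omega>. indicator Fc \<omega> * Lsum n \<omega> \<partial>P)"
    by (rule Bochner_Integration.integral_add[OF int1 int2])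
  also have "\<dots> \<le> - measure P F * ln (measure P F / measure Q F) - measure P Fc * ln (measure P Fc / measure Q Fc)"
    using p1 p2 by simp
  also have "\<dots> = - kl (measure P F) (measure Q F)" by (simp add: kl_def pc qc)
  finally have "(\<integral>\<omega>. Lsum n \<omega> \<partial>P) \<le> - kl (measure P F) (measure Q F)" .
  moreover have "(\<integral>\<omega>. Lsum n \<omega> \<partial>P) \<ge> - (real n * M)" by (rule int_Lsum_lower[OF M])
  ultimately show ?thesis by (simp add: F_def[symmetric] FQ)
qed

end


definition lst :: "nat \<Rightarrow> real \<times> (nat \<Rightarrow> nat) \<times> (nat \<Rightarrow> real) \<Rightarrow> nat list" where
  "lst n h = map (\<lambda>s. fst (snd h) s) [0..<n]"

lemma m_lst: "lst n \<in> HS \<rightarrow>\<^sub>M count_space UNIV"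
proof (induction n)
  case 0 then show ?case by (simp add: lst_def)
next
  case (Suc n)
  have "(\<lambda>h. (\<lambda>xs h. xs @ [fst (snd h) n]) (lst n h) h) \<in> HS \<rightarrow>\<^sub>M count_space UNIV"
  proof (rule measurable_compose_countable[OF _ Suc])
    fix xs :: "nat list"
    show "(\<lambda>h. xs @ [fst (snd h) n]) \<in> HS \<rightarrow>\<^sub>M count_space UNIV"
      by (rule measurable_compose[OF m_HS_comps(2)]) simp
  qed
  then show ?case by (simp add: lst_def)
qed

lemma pred_lst: "Measurable.pred HS (\<lambda>h. \<Phi> (lst n h))"
  by (rule measurable_compose[OF m_lst]) simp

definition cnt :: "nat \<Rightarrow> real \<times> (nat \<Rightarrow> nat) \<times> (nat \<Rightarrow> real) \<Rightarrow> nat \<Rightarrow> nat" where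
  "cnt n h i = card {s. s < n \<and> fst (snd h) s = i}"

lemma cnt_lst: "cnt n h = (\<lambda>i. card {s. s < n \<and> lst n h ! s = i})"
  by (auto simp: cnt_def lst_def fun_eq_iff intro!: arg_cong[where f=card])

lemma pred_cnt: "Measurable.pred HS (\<lambda>h. \<Phi> (cnt n h))"
  unfolding cnt_lst by (rule pred_lst)

lemma pulls_cnt: "pulls \<pi> (fst \<omega>) (snd \<omega>) i n = cnt n (hist \<pi> n \<omega>) i"
proof -
  have "pulls \<pi> (fst \<omega>) (snd \<omega>) i n = length (filter (\<lambda>j. j = i) (ahist \<pi> n \<omega>))"
    by (simp add: pulls_def ahist_def)
  also have "\<dots> = card {s. s < n \<and> ahist \<pi> n \<omega> ! s = i}" by (simp add: length_filter_conv_card)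
  also have "\<dots> = cnt n (hist \<pi> n \<omega>) i"
    by (auto simp: cnt_def hist_def inp_def intro!: arg_cong[where f=card])
  finally show ?thesis .
qed

lemma sum_cnt:
  assumes "\<And>s. s < n \<Longrightarrow> fst (snd h) s \<in> A" "finite A"
  shows "(\<Sum>i\<in>A. cnt n h i) = n"
proof -
  have "(\<Sum>i\<in>A. cnt n h i) = card (\<Union>i\<in>A. {s. s < n \<and> fst (snd h) s = i})"
    unfolding cnt_def by (rule card_UN_disjoint[symmetric]) (use assms in auto)
  also have "(\<Union>i\<in>A. {s. s < n \<and> fst (snd h) s = i}) = {..<n}" using assms by auto
  finally show ?thesis by simp
qed

lemma hist_arms: "s < n \<Longrightarrow> fst (snd (hist \<pi> n \<omega>)) s = \<pi> s (hist \<pi> s \<omega>)"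
  by (rule hist_A)

context bctx2 begin

lemma posQ:
  assumes Psi: "Measurable.pred HS \<Psi>"
    and pos: "measure P {\<omega> \<in> space P. \<Psi> (hist \<pi> n \<omega>)} > 0"
  shows "measure Q {\<omega> \<in> space Q. \<Psi> (hist \<pi> n \<omega>)} > 0"
proof -
  interpret PP: prob_space P by (rule prob_B[OF okP])
  define F where "F = {\<omega> \<in> space P. \<Psi> (hist \<pi> n \<omega>)}"
  have FsP: "F \<in> sets P" using F_sets[OF Psi okP] by (simp add: F_def)
  define b where "b = measure Q {\<omega> \<in> space Q. \<Psi> (hist \<pi> n \<omega>)}"
  have b_eq: "b = (\<integral>\<omega>. indicator F \<omega> * exp (Lsum n \<omega>) \<partial>P)" unfolding b_def F_def by (rule QF[OF Psi])
  have mI: "(\<lambda>\<omega>. indicator F \<omega> * exp (Lsum n \<omega>)) \<in> borel_measurable P" using FsP by measurable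
  have bnd1: "\<bar>indicator F \<omega> * exp (Lsum n \<omega>)\<bar> \<le> exp (real n * Cb)" for \<omega>
  proof -
    have "exp (Lsum n \<omega>) \<le> exp (real n * Cb)" using Lsum_bound[of n \<omega>] by (simp add: abs_le_iff)
    then show ?thesis by (auto simp: indicator_def)
  qed
  have intE: "integrable P (\<lambda>\<omega>. indicator F \<omega> * exp (Lsum n \<omega>))"
    by (rule PP.integrable_const_bound[where B="exp (real n * Cb)", OF _ mI]) (use bnd1 in auto)
  show ?thesis
  proof (rule ccontr)
    assume "\<not> ?thesis"
    then have "\<not> b > 0" by (simp add: b_def)
    moreover have "b \<ge> 0" unfolding b_eq by (rule integral_nonneg_AE) (simp add: indicator_def)
    ultimately have "(\<integral>\<omega>. indicator F \<omega> * exp (Lsum n \<omega>) \<partial>P) = 0" using b_eq by linarith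
    then have "AE \<omega> in P. indicator F \<omega> * exp (Lsum n \<omega>) = 0"
      using integral_nonneg_eq_0_iff_AE[OF intE] by (simp add: indicator_def)
    then have "AE \<omega> in P. \<omega> \<notin> F" by eventually_elim (auto simp: indicator_def)
    then have "emeasure P F = 0"
      using AE_iff_measurable[OF FsP, of "\<lambda>\<omega>. \<omega> \<notin> F"] FsP[THEN sets.sets_into_space] by auto
    then have "measure P F = 0" by (simp add: measure_def)
    then show False using pos by (simp add: F_def)
  qed
qed

end


lemma real_min_le: "real_of_ereal (min (ereal (real n)) (cfac D L \<mu> T i)) \<le> real n"
  by (cases "Dkl (D (\<mu> i)) (D (best_mean L \<mu>)) = 0") (auto simp: cfac_def Let_def min_def)

lemma best_mean_ge: "i \<in> {1..L} \<Longrightarrow> \<mu> i \<le> best_mean L \<mu>"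
  unfolding best_mean_def by (rule Max_ge) auto

lemma save_hat_le:
  shows "save_hat D L \<mu> T n \<le> (\<Sum>i\<in>{1..L}. (best_mean L \<mu> - \<mu> i) * real (n i))"
proof -
  have "save_hat D L \<mu> T n \<le> (\<Sum>i\<in>{i\<in>{1..L}. best_mean L \<mu> - \<mu> i > 0}. (best_mean L \<mu> - \<mu> i) * real (n i))"
    unfolding save_hat_def by (rule sum_mono) (auto intro!: mult_left_mono real_min_le)
  also have "\<dots> \<le> (\<Sum>i\<in>{1..L}. (best_mean L \<mu> - \<mu> i) * real (n i))"
  proof (rule sum_mono2)
    fix b assume "b \<in> {1..L} - {i\<in>{1..L}. best_mean L \<mu> - \<mu> i > 0}"
    then have "best_mean L \<mu> - \<mu> b \<ge> 0" using best_mean_ge[of b L \<mu>] by auto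
    then show "0 \<le> (best_mean L \<mu> - \<mu> b) * real (n b)" by simp
  qed auto
  finally show ?thesis .
qed

lemma best_mean_eq:
  assumes "i0 \<in> {1..L}" "\<And>i. i \<in> {1..L} \<Longrightarrow> \<mu> i \<le> \<mu> i0"
  shows "best_mean L \<mu> = \<mu> i0"
  unfolding best_mean_def using assms by (intro Max_eqI) auto

lemma sss:
  fixes \<nu> :: "nat \<Rightarrow> real" and lo hi cc :: real
  assumes vals: "\<forall>j\<in>{1..L}. \<nu> j = lo \<or> \<nu> j = hi"
    and mono: "\<forall>i j. 1 \<le> i \<longrightarrow> i \<le> j \<longrightarrow> j \<le> L \<longrightarrow> \<nu> j \<le> \<nu> i"
    and lohi: "lo < hi"
    and m1: "1 \<le> m" and mdef: "m = card {j\<in>{1..L}. \<nu> j = hi}" and mL: "m < L"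
    and d0: "Dkl (D lo) (D hi) \<noteq> 0" and dhh: "Dkl (D hi) (D hi) = 0"
    and cc: "cc = ln (real T) / Dkl (D lo) (D hi)"
    and TFE: "real TFE \<le> real (L - m) * cc"
  shows "save_star_sorted D L \<nu> T TFE = (hi - lo) * real TFE"
proof -
  define H where "H = {j\<in>{1..L}. \<nu> j = hi}"
  have finH: "finite H" by (simp add: H_def)
  have mH: "m = card H" unfolding H_def by (rule mdef)
  have Hne: "H \<noteq> {}" using m1 mH by auto
  define M' where "M' = Max H"
  have M'H: "M' \<in> H" using finH Hne by (simp add: M'_def)
  have "{1..M'} \<subseteq> H"
  proof
    fix j assume j: "j \<in> {1..M'}"
    have "\<nu> M' \<le> \<nu> j" using mono j M'H by (auto simp: H_def)
    moreover have "\<nu> M' = hi" using M'H by (simp add: H_def)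
    moreover have "j \<in> {1..L}" using j M'H by (auto simp: H_def)
    ultimately have "\<nu> j = hi"
    proof -
      assume a: "\<nu> M' \<le> \<nu> j" "\<nu> M' = hi" "j \<in> {1..L}"
      have "\<nu> j = lo \<or> \<nu> j = hi" using vals a(3) by blast
      then show ?thesis using a lohi by auto
    qed
    then show "j \<in> H" using \<open>j \<in> {1..L}\<close> by (simp add: H_def)
  qed
  moreover have "H \<subseteq> {1..M'}" using finH by (auto simp: M'_def H_def)
  ultimately have HM: "H = {1..M'}" by blast
  then have mM: "m = M'" using mH by simp
  have pre: "\<nu> j = hi \<longleftrightarrow> j \<le> m" if "j \<in> {1..L}" for j
    using HM mM that by (auto simp: H_def set_eq_iff)
  have lo_gt: "\<nu> j = lo" if "j \<in> {1..L}" "m < j" for j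
    using pre[OF that(1)] vals that by auto
  have bm: "best_mean L \<nu> = hi"
  proof -
    have "best_mean L \<nu> = \<nu> 1" by (rule best_mean_eq) (use mono mL in auto)
    also have "\<dots> = hi" using pre[of 1] m1 mL by auto
    finally show ?thesis .
  qed
  have cf: "cfac D L \<nu> T j = (if j \<le> m then \<infinity> else ereal cc)" if "j \<in> {1..L}" for j
  proof (cases "j \<le> m")
    case True
    then have "\<nu> j = hi" using pre[OF that] by simp
    then show ?thesis using True dhh by (simp add: cfac_def bm)
  next
    case False
    then have "\<nu> j = lo" using lo_gt[OF that] by simp
    then show ?thesis using False d0 by (simp add: cfac_def bm cc)
  qed
  have sums: "(\<Sum>i\<in>{j..L}. cfac D L \<nu> T i) = (if j \<le> m then \<infinity> else ereal (real (Suc L - j) * cc))"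
    if "j \<in> {1..L}" for j
  proof (cases "j \<le> m")
    case True
    have "(\<Sum>i\<in>{j..L}. cfac D L \<nu> T i) = \<infinity>"
      unfolding sum_Pinfty using True that cf[OF that] by auto
    then show ?thesis using True by simp
  next
    case False
    have "(\<Sum>i\<in>{j..L}. cfac D L \<nu> T i) = (\<Sum>i\<in>{j..L}. ereal cc)"
      by (rule sum.cong) (use False that cf in auto)
    also have "\<dots> = ereal (real (Suc L - j) * cc)" by simp
    finally show ?thesis using False by simp
  qed
  define S where "S = {j\<in>{1..L}. (\<Sum>i\<in>{j..L}. cfac D L \<nu> T i) \<ge> ereal (real TFE)}"
  have mS: "Suc m \<in> S"
  proof -
    have j: "Suc m \<in> {1..L}" using mL by simp
    have "Suc L - Suc m = L - m" by simp
    then show ?thesis unfolding S_def using sums[OF j] TFE j by simp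
  qed
  define iFE where "iFE = Max S"
  have finS: "finite S" by (simp add: S_def)
  have iS: "iFE \<in> S" unfolding iFE_def by (rule Max_in[OF finS]) (use mS in auto)
  have iL: "iFE \<in> {1..L}" using iS by (simp add: S_def)
  have im: "m < iFE" using Max_ge[OF finS mS] by (simp add: iFE_def)
  have D_i: "hi - \<nu> iFE = hi - lo" using lo_gt[OF iL im] by simp
  have s1: "(\<Sum>i\<in>{iFE<..L}. cfac D L \<nu> T i) = ereal (real (L - iFE) * cc)"
  proof -
    have "(\<Sum>i\<in>{iFE<..L}. cfac D L \<nu> T i) = (\<Sum>i\<in>{iFE<..L}. ereal cc)"
      by (rule sum.cong) (use im iL cf in auto)
    then show ?thesis by simp
  qed
  have s2: "(\<Sum>i\<in>{iFE<..L}. ereal (hi - \<nu> i) * cfac D L \<nu> T i) = ereal (real (L - iFE) * ((hi - lo) * cc))"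
  proof -
    have "(\<Sum>i\<in>{iFE<..L}. ereal (hi - \<nu> i) * cfac D L \<nu> T i) = (\<Sum>i\<in>{iFE<..L}. ereal ((hi - lo) * cc))"
    proof (rule sum.cong)
      fix i assume i: "i \<in> {iFE<..L}"
      then have i1: "i \<in> {1..L}" "m < i" using im iL by auto
      show "ereal (hi - \<nu> i) * cfac D L \<nu> T i = ereal ((hi - lo) * cc)"
        using lo_gt[OF i1] cf[OF i1(1)] i1(2) bm by simp
    qed simp
    then show ?thesis by simp
  qed
  have "save_star_sorted D L \<nu> T TFE
      = real_of_ereal (ereal (hi - lo) * (ereal (real TFE) - ereal (real (L - iFE) * cc)) + ereal (real (L - iFE) * ((hi - lo) * cc)))"
    unfolding save_star_sorted_def Let_def bm S_def[symmetric] iFE_def[symmetric] s1 s2 D_i ..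
  also have "\<dots> = (hi - lo) * real TFE" by (simp add: algebra_simps)
  finally show ?thesis .
qed

lemma sorting_exists: "\<exists>\<sigma>. sorting_perm L \<mu> \<sigma>"
proof -
  define xs where "xs = sort_key (\<lambda>i. - \<mu> i) [1..<Suc L]"
  have len: "length xs = L" by (simp add: xs_def)
  have dist: "distinct xs" by (simp add: xs_def)
  have setx: "set xs = {1..L}" by (auto simp: xs_def)
  have srt: "sorted (map (\<lambda>i. - \<mu> i) xs)" by (simp add: xs_def)
  define \<sigma> where "\<sigma> k = (if k \<in> {1..L} then xs ! (k - 1) else k)" for k
  have b1: "bij_betw (\<lambda>k. k - 1) {1..L} {..<L}"
    by (rule bij_betwI[where g=Suc]) auto
  have b2: "bij_betw ((!) xs) {..<L} {1..L}"
    by (rule bij_betw_nth) (use dist len setx in auto)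
  have "bij_betw ((!) xs \<circ> (\<lambda>k. k - 1)) {1..L} {1..L}" by (rule bij_betw_trans[OF b1 b2])
  then have "bij_betw \<sigma> {1..L} {1..L}"
    by (rule bij_betw_cong[THEN iffD1, rotated]) (auto simp: \<sigma>_def)
  then have perm: "\<sigma> permutes {1..L}"
    by (rule bij_imp_permutes) (auto simp: \<sigma>_def)
  have mono: "\<mu> (\<sigma> j) \<le> \<mu> (\<sigma> i)" if "1 \<le> i" "i \<le> j" "j \<le> L" for i j
  proof -
    have "(map (\<lambda>i. - \<mu> i) xs) ! (i - 1) \<le> (map (\<lambda>i. - \<mu> i) xs) ! (j - 1)"
      by (rule sorted_nth_mono[OF srt]) (use that len in auto)
    then show ?thesis using that len by (simp add: \<sigma>_def)
  qed
  show ?thesis unfolding sorting_perm_def using perm mono by blast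
qed

lemma save_star_two:
  fixes \<mu>' :: "nat \<Rightarrow> real" and lo hi cc :: real
  assumes vals: "\<forall>j\<in>{1..L}. \<mu>' j = lo \<or> \<mu>' j = hi"
    and lohi: "lo < hi"
    and hiex: "\<exists>j\<in>{1..L}. \<mu>' j = hi"
    and kdef: "k = card {j\<in>{1..L}. \<mu>' j = lo}" and k1: "1 \<le> k"
    and d0: "Dkl (D lo) (D hi) \<noteq> 0" and dhh: "Dkl (D hi) (D hi) = 0"
    and cc: "cc = ln (real T) / Dkl (D lo) (D hi)"
    and TFE: "real TFE \<le> real k * cc"
  shows "save_star D L \<mu>' T TFE = (hi - lo) * real TFE"
proof -
  define \<sigma> where "\<sigma> = (SOME \<sigma>. sorting_perm L \<mu>' \<sigma>)"
  have sp: "sorting_perm L \<mu>' \<sigma>" unfolding \<sigma>_def by (rule someI_ex[OF sorting_exists])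
  then have perm: "\<sigma> permutes {1..L}" and mono0: "\<forall>i j. 1 \<le> i \<longrightarrow> i \<le> j \<longrightarrow> j \<le> L \<longrightarrow> \<mu>' (\<sigma> j) \<le> \<mu>' (\<sigma> i)"
    by (auto simp: sorting_perm_def)
  have bij: "bij_betw \<sigma> {1..L} {1..L}" by (rule permutes_imp_bij[OF perm])
  have inS: "\<sigma> j \<in> {1..L}" if "j \<in> {1..L}" for j using permutes_in_image[OF perm, of j] that by blast
  define \<nu> where "\<nu> = \<mu>' \<circ> \<sigma>"
  have vals': "\<forall>j\<in>{1..L}. \<nu> j = lo \<or> \<nu> j = hi" using vals inS by (auto simp: \<nu>_def)
  have mono: "\<forall>i j. 1 \<le> i \<longrightarrow> i \<le> j \<longrightarrow> j \<le> L \<longrightarrow> \<nu> j \<le> \<nu> i" using mono0 by (simp add: \<nu>_def)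
  have cardeq: "card {j\<in>{1..L}. \<nu> j = v} = card {i\<in>{1..L}. \<mu>' i = v}" for v
  proof -
    have img: "\<sigma> ` {j\<in>{1..L}. \<nu> j = v} = {i\<in>{1..L}. \<mu>' i = v}"
    proof
      show "\<sigma> ` {j\<in>{1..L}. \<nu> j = v} \<subseteq> {i\<in>{1..L}. \<mu>' i = v}" using inS by (auto simp: \<nu>_def)
      show "{i\<in>{1..L}. \<mu>' i = v} \<subseteq> \<sigma> ` {j\<in>{1..L}. \<nu> j = v}"
      proof
        fix i assume i: "i \<in> {i\<in>{1..L}. \<mu>' i = v}"
        have "i \<in> \<sigma> ` {1..L}" using i bij unfolding bij_betw_def by auto
        then obtain j where j: "j \<in> {1..L}" "\<sigma> j = i" by blast
        then show "i \<in> \<sigma> ` {j\<in>{1..L}. \<nu> j = v}" using i by (auto simp: \<nu>_def)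
      qed
    qed
    have inj: "inj_on \<sigma> {j\<in>{1..L}. \<nu> j = v}"
      using bij unfolding bij_betw_def by (rule inj_on_subset[OF conjunct1]) auto
    have "card (\<sigma> ` {j\<in>{1..L}. \<nu> j = v}) = card {j\<in>{1..L}. \<nu> j = v}" by (rule card_image[OF inj])
    then show ?thesis by (simp only: img)
  qed
  define m where "m = card {j\<in>{1..L}. \<nu> j = hi}"
  have part: "{1..L} = {i\<in>{1..L}. \<mu>' i = hi} \<union> {i\<in>{1..L}. \<mu>' i = lo}" using vals by auto
  have disj: "{i\<in>{1..L}. \<mu>' i = hi} \<inter> {i\<in>{1..L}. \<mu>' i = lo} = {}" using lohi by auto
  have "card ({i\<in>{1..L}. \<mu>' i = hi} \<union> {i\<in>{1..L}. \<mu>' i = lo}) = card {i\<in>{1..L}. \<mu>' i = hi} + card {i\<in>{1..L}. \<mu>' i = lo}"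
    by (rule card_Un_disjoint) (use disj in auto)
  then have "card {1..L} = card {i\<in>{1..L}. \<mu>' i = hi} + card {i\<in>{1..L}. \<mu>' i = lo}"
    by (simp only: part[symmetric])
  then have "L = card {i\<in>{1..L}. \<mu>' i = hi} + card {i\<in>{1..L}. \<mu>' i = lo}" by simp
  then have mk: "m + k = L" using cardeq[of hi] kdef m_def by simp
  have m1: "1 \<le> m"
  proof -
    obtain j where "j \<in> {1..L}" "\<mu>' j = hi" using hiex by blast
    then have ne: "{i\<in>{1..L}. \<mu>' i = hi} \<noteq> {}" by auto
    have pos: "0 < card {i\<in>{1..L}. \<mu>' i = hi}" using ne by (simp only: card_gt_0_iff) simp
    have "m = card {i\<in>{1..L}. \<mu>' i = hi}" using m_def cardeq[of hi] by simp
    then show ?thesis using pos by linarith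
  qed
  have "save_star_sorted D L \<nu> T TFE = (hi - lo) * real TFE"
    by (rule sss[OF vals' mono lohi m1 m_def _ d0 dhh cc]) (use mk k1 TFE in auto)
  then show ?thesis by (simp add: save_star_def \<sigma>_def[symmetric] \<nu>_def)
qed



lemma arith_core:
  fixes a F S DL th' thr Ng :: real
  assumes a: "0 < a" "a < 1" and F: "0 < F" and thr: "thr = S / F - (1 - a) / a * DL"
    and t1: "th' < thr" and t2: "th' \<le> DL" and ng: "a * F \<le> Ng"
    and sv: "a * S \<le> th' * Ng + DL * (F - Ng)"
  shows False
proof -
  have S: "a * S = a * F * thr + (1 - a) * F * DL" using a F thr by (simp add: field_simps)
  have "(DL - th') * (a * F) \<le> (DL - th') * Ng" using t2 ng by (intro mult_left_mono) auto
  then have "th' * Ng + DL * (F - Ng) \<le> a * F * th' + (1 - a) * F * DL" by (simp add: algebra_simps)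
  moreover have "a * F * th' < a * F * thr" using a F t1 by simp
  ultimately show False using sv S by linarith
qed

lemma arith_core0:
  fixes a F S DL thr :: real
  assumes a: "0 < a" "a < 1" and F: "0 < F" and thr: "thr = S / F - (1 - a) / a * DL"
    and t1: "DL < thr" and sv: "a * S \<le> DL * F"
  shows False
proof -
  have S: "a * S = a * F * thr + (1 - a) * F * DL" using a F thr by (simp add: field_simps)
  have "a * F * DL < a * F * thr" using a F t1 by simp
  then show False using sv S by (simp add: algebra_simps)
qed

lemma sum_le_max:
  fixes f :: "nat \<Rightarrow> real" and n :: "nat \<Rightarrow> nat"
  assumes "finite A" "\<And>i. i \<in> A \<Longrightarrow> f i \<le> c"
  shows "(\<Sum>i\<in>A. f i * real (n i)) \<le> c * (\<Sum>i\<in>A. real (n i))"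
  unfolding sum_distrib_left by (rule sum_mono) (use assms in \<open>auto intro: mult_right_mono\<close>)



theorem mainTheorem7:
  fixes D :: "real \<Rightarrow> real measure" and I :: "real set"
    and L T TFE :: nat and \<mu> :: "nat \<Rightarrow> real" and \<alpha> \<beta> \<xi>1 :: real and \<pi> :: policy
  assumes family: "sp_exp_family D I"
    and means_in: "\<forall>i\<in>{1..L}. \<mu> i \<in> I"
    and sorted: "\<forall>i j. 1 \<le> i \<longrightarrow> i \<le> j \<longrightarrow> j \<le> L \<longrightarrow> \<mu> j \<le> \<mu> i"
    and gap: "\<mu> 1 > \<mu> L"
    and TFE_pos: "TFE > 0"
    and alpha: "0 < \<alpha>" "\<alpha> < 1"
    and beta: "0 < \<beta>" "\<beta> < 1"
    and xi_pos: "\<xi>1 > 0"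
    and low_in: "(\<mu> 1 + \<mu> L - \<xi>1) / 2 \<in> I"
    and high_in: "(\<mu> 1 + \<mu> L + \<xi>1) / 2 \<in> I"
    and Lg_nonempty:
      "{i\<in>{1..L}. \<mu> 1 - \<mu> i < save_star D L \<mu> T TFE / real TFE - (1 - \<alpha>) / \<alpha> * (\<mu> 1 - \<mu> L)} \<noteq> {}"
    and Lg_large:
      "real (card {i\<in>{1..L}. \<mu> 1 - \<mu> i < save_star D L \<mu> T TFE / real TFE - (1 - \<alpha>) / \<alpha> * (\<mu> 1 - \<mu> L)})
         * ln (real T) / Dkl (D ((\<mu> 1 + \<mu> L - \<xi>1) / 2)) (D ((\<mu> 1 + \<mu> L + \<xi>1) / 2)) > real TFE"
    and policy_arms: "\<forall>t x. \<pi> t x \<in> {1..L}"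
    and policy_meas: "policy_measurable \<pi>"
    and saving: "probably_saving D L \<pi> \<alpha> \<beta> T TFE
       {\<mu>, (\<lambda>i. if \<mu> 1 - \<mu> i < save_star D L \<mu> T TFE / real TFE - (1 - \<alpha>) / \<alpha> * (\<mu> 1 - \<mu> L)
                then (\<mu> 1 + \<mu> L - \<xi>1) / 2 else (\<mu> 1 + \<mu> L + \<xi>1) / 2)}"
  shows "real TFE \<ge> \<beta> * ln (real T) /
     Max ((\<lambda>i. Dkl (D (\<mu> i))
        (D (if \<mu> 1 - \<mu> i < save_star D L \<mu> T TFE / real TFE - (1 - \<alpha>) / \<alpha> * (\<mu> 1 - \<mu> L)
            then (\<mu> 1 + \<mu> L - \<xi>1) / 2 else (\<mu> 1 + \<mu> L + \<xi>1) / 2))) ` {1..L})"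
proof -
  define thr where "thr = save_star D L \<mu> T TFE / real TFE - (1 - \<alpha>) / \<alpha> * (\<mu> 1 - \<mu> L)"
  define lo where "lo = (\<mu> 1 + \<mu> L - \<xi>1) / 2"
  define hi where "hi = (\<mu> 1 + \<mu> L + \<xi>1) / 2"
  define \<mu>1 where "\<mu>1 = (\<lambda>i. if \<mu> 1 - \<mu> i < thr then lo else hi)"
  define Lg where "Lg = {i\<in>{1..L}. \<mu> 1 - \<mu> i < thr}"
  define d0 where "d0 = Dkl (D lo) (D hi)"
  define Mx where "Mx = Max ((\<lambda>i. Dkl (D (\<mu> i)) (D (\<mu>1 i))) ` {1..L})"
  have goal_eq: "?thesis \<longleftrightarrow> real TFE \<ge> \<beta> * ln (real T) / Mx"
    unfolding Mx_def \<mu>1_def thr_def lo_def hi_def by (rule refl)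
  have Lg_ne: "Lg \<noteq> {}" using Lg_nonempty unfolding Lg_def thr_def .
  have Lg_lg: "real (card Lg) * ln (real T) / d0 > real TFE"
    using Lg_large unfolding Lg_def thr_def d0_def lo_def hi_def .
  have sav: "probably_saving D L \<pi> \<alpha> \<beta> T TFE {\<mu>, \<mu>1}"
    using saving unfolding \<mu>1_def thr_def lo_def hi_def .
  have L1: "1 \<le> L" using Lg_ne by (auto simp: Lg_def)
  have lohi: "lo < hi" using xi_pos by (simp add: lo_def hi_def)
  have TFEp: "0 < real TFE" using TFE_pos by simp
  have lnT: "0 < ln (real T)"
  proof (rule ccontr)
    assume "\<not> 0 < ln (real T)"
    moreover have "0 \<le> ln (real T)" by (cases "T = 0") auto
    ultimately have "ln (real T) = 0" by simp
    then show False using Lg_lg TFEp by simp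
  qed
  have d0p: "0 < d0"
  proof (rule ccontr)
    assume "\<not> 0 < d0"
    then have "real (card Lg) * ln (real T) / d0 \<le> 0"
      using lnT by (intro divide_nonneg_nonpos) auto
    then show False using Lg_lg TFEp by simp
  qed
  show ?thesis unfolding goal_eq
  proof (cases "Mx \<le> 0")
    case True
    have "\<beta> * ln (real T) / Mx \<le> 0" using True beta lnT by (intro divide_nonneg_nonpos) auto
    then show "real TFE \<ge> \<beta> * ln (real T) / Mx" using TFEp by simp
  next
    case False
    then have Mxp: "0 < Mx" by simp
    obtain \<rho> \<theta> Af where fam: "sets \<rho> = sets borel" "emeasure \<rho> (- {0..1}) = 0" "inj_on \<theta> I"
      "\<forall>m\<in>I. D m = density \<rho> (\<lambda>x. ennreal (exp (\<theta> m * x - Af m))) \<and>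
                prob_space (D m) \<and> integrable (D m) (\<lambda>x. x) \<and> (\<integral>x. x \<partial>D m) = m"
      using family unfolding sp_exp_family_def by blast
    have okP: "\<forall>i\<in>{1..L}. \<mu> i \<in> I" by (rule means_in)
    have okQ: "\<forall>i\<in>{1..L}. \<mu>1 i \<in> I" using low_in high_in by (auto simp: \<mu>1_def lo_def hi_def)
    have Dm: "D m = density \<rho> (\<lambda>x. ennreal (exp (\<theta> m * x - Af m)))" if "m \<in> I" for m using fam(4) that by blast
    have Dp: "prob_space (D m)" if "m \<in> I" for m using fam(4) that by blast
    have Di: "integrable (D m) (\<lambda>x. x)" if "m \<in> I" for m using fam(4) that by blast
    have Dmean: "(\<integral>x. x \<partial>D m) = m" if "m \<in> I" for m using fam(4) that by blast
    have arms': "\<pi> t x \<in> {1..L}" for t x using policy_arms by blast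
    have bc: "bctx D I L \<pi> \<rho> \<theta> Af"
      by (rule bctx.intro[OF fam(1) fam(2) Dm Dp Di Dmean arms' policy_meas])
    interpret B0: bctx D I L \<pi> \<rho> \<theta> Af by (rule bc)
    have okP': "B0.ok \<mu>" using okP by (simp only: B0.ok_def)
    have okQ': "B0.ok \<mu>1" using okQ by (simp only: B0.ok_def)
    interpret B: bctx2 D I L \<pi> \<rho> \<theta> Af \<mu> \<mu>1
      by (rule bctx2.intro[OF bc bctx2_axioms.intro[OF okP' okQ']])
    interpret PP: prob_space "bandit_space D L \<mu>" by (rule B0.prob_B[OF okP'])
    interpret QQ: prob_space "bandit_space D L \<mu>1" by (rule B0.prob_B[OF okQ'])
    define \<delta> where "\<delta> = real T powr (-\<beta>) / 2.4"
    have T1: "1 < real T"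
    proof (rule ccontr)
      assume "\<not> 1 < real T"
      then have "real T \<le> 1" by simp
      then have "ln (real T) \<le> 0" by (cases "T = 0") auto
      then show False using lnT by simp
    qed
    have pw: "real T powr (-\<beta>) < 1" by (rule powr_less_one) (use T1 beta in auto)
    have pw0: "0 < real T powr (-\<beta>)" using T1 by simp
    have dpos: "0 < \<delta>" using pw0 by (simp add: \<delta>_def)
    have dlt: "\<delta> < 5 / 12" using pw by (simp add: \<delta>_def)
    have lnd: "- ln (12 / 5 * \<delta>) = \<beta> * ln (real T)"
    proof -
      have "12 / 5 * \<delta> = real T powr (-\<beta>)" by (simp add: \<delta>_def)
      then show ?thesis using T1 by (simp add: ln_powr)
    qed
    define \<Psi>0 where "\<Psi>0 h = (\<alpha> * save_star D L \<mu> T TFE \<le> save_hat D L \<mu> T (cnt TFE h))" for h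
    define \<Psi>1 where "\<Psi>1 h = (\<alpha> * save_star D L \<mu>1 T TFE \<le> save_hat D L \<mu>1 T (cnt TFE h))" for h
    have pred0: "Measurable.pred HS \<Psi>0" unfolding \<Psi>0_def by (rule pred_cnt)
    have pred1: "Measurable.pred HS \<Psi>1" unfolding \<Psi>1_def by (rule pred_cnt)
    have pc: "(\<lambda>i. pulls \<pi> (fst \<omega>) (snd \<omega>) i TFE) = cnt TFE (hist \<pi> TFE \<omega>)" for \<omega>
      by (rule ext) (rule pulls_cnt)
    define E0 where "E0 = {\<omega> \<in> space (bandit_space D L \<mu>). \<Psi>0 (hist \<pi> TFE \<omega>)}"
    define E0Q where "E0Q = {\<omega> \<in> space (bandit_space D L \<mu>1). \<Psi>0 (hist \<pi> TFE \<omega>)}"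
    define E1 where "E1 = {\<omega> \<in> space (bandit_space D L \<mu>1). \<Psi>1 (hist \<pi> TFE \<omega>)}"
    have P0: "measure (bandit_space D L \<mu>) E0 \<ge> 1 - \<delta>"
      using sav unfolding probably_saving_def E0_def \<Psi>0_def \<delta>_def pc by simp
    have Q1: "measure (bandit_space D L \<mu>1) E1 \<ge> 1 - \<delta>"
      using sav unfolding probably_saving_def E1_def \<Psi>1_def \<delta>_def pc by simp
    have disj: "\<not> (\<Psi>0 (hist \<pi> TFE \<omega>) \<and> \<Psi>1 (hist \<pi> TFE \<omega>))" for \<omega>
    proof
      assume both: "\<Psi>0 (hist \<pi> TFE \<omega>) \<and> \<Psi>1 (hist \<pi> TFE \<omega>)"
      define n where "n = cnt TFE (hist \<pi> TFE \<omega>)"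
      have sumn0: "(\<Sum>i\<in>{1..L}. n i) = TFE"
        unfolding n_def by (rule sum_cnt) (use arms' in \<open>auto simp: hist_arms\<close>)
      have sumn: "(\<Sum>i\<in>{1..L}. real (n i)) = real TFE"
        using sumn0 by (metis of_nat_sum)
      have bm: "best_mean L \<mu> = \<mu> 1" by (rule best_mean_eq) (use L1 sorted in auto)
      have h0: "\<alpha> * save_star D L \<mu> T TFE \<le> (\<Sum>i\<in>{1..L}. (\<mu> 1 - \<mu> i) * real (n i))"
        using both save_hat_le[of D L \<mu> T n] bm by (simp add: \<Psi>0_def n_def)
      have DL: "\<mu> 1 - \<mu> i \<le> \<mu> 1 - \<mu> L" if "i \<in> {1..L}" for i using sorted that by auto
      have notL: "\<not> (\<mu> 1 - \<mu> L < thr)"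
      proof
        assume lt: "\<mu> 1 - \<mu> L < thr"
        have "(\<Sum>i\<in>{1..L}. (\<mu> 1 - \<mu> i) * real (n i)) \<le> (\<mu> 1 - \<mu> L) * (\<Sum>i\<in>{1..L}. real (n i))"
          by (rule sum_le_max) (use DL in auto)
        then have "\<alpha> * save_star D L \<mu> T TFE \<le> (\<mu> 1 - \<mu> L) * real TFE" using h0 sumn by simp
        then show False by (intro arith_core0[OF alpha TFEp thr_def lt]) simp
      qed
      have mu1L: "\<mu>1 L = hi" using notL by (simp add: \<mu>1_def)
      have mu1v: "\<forall>j\<in>{1..L}. \<mu>1 j = lo \<or> \<mu>1 j = hi" by (simp add: \<mu>1_def)
      have bm1: "best_mean L \<mu>1 = hi"
        using best_mean_eq[of L L \<mu>1] L1 mu1L lohi by (auto simp: \<mu>1_def)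
      have Lgeq: "{j\<in>{1..L}. \<mu>1 j = lo} = Lg" using lohi by (auto simp: \<mu>1_def Lg_def)
      have k1: "1 \<le> card Lg" using Lg_ne by (simp add: Lg_def Suc_le_eq card_gt_0_iff)
      have hiI: "hi \<in> I" using high_in by (simp add: hi_def)
      have dhh: "Dkl (D hi) (D hi) = 0"
      proof -
        interpret Dh: prob_space "D hi" by (rule Dp[OF hiI])
        show ?thesis by (simp add: Dkl_def Dh.KL_same_eq_0)
      qed
      have ss1: "save_star D L \<mu>1 T TFE = (hi - lo) * real TFE"
      proof (rule save_star_two[where k="card Lg" and cc="ln (real T) / Dkl (D lo) (D hi)" and lo=lo and hi=hi and \<mu>'=\<mu>1])
        show "\<forall>j\<in>{1..L}. \<mu>1 j = lo \<or> \<mu>1 j = hi" by (rule mu1v)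
        show "lo < hi" by (rule lohi)
        show "card Lg = card {j\<in>{1..L}. \<mu>1 j = lo}" by (simp only: Lgeq)
        show "1 \<le> card Lg" by (rule k1)
        show "\<exists>j\<in>{1..L}. \<mu>1 j = hi" using mu1L L1 by auto
        show "Dkl (D lo) (D hi) \<noteq> 0" using d0p by (simp add: d0_def)
        show "Dkl (D hi) (D hi) = 0" by (rule dhh)
        show "real TFE \<le> real (card Lg) * (ln (real T) / Dkl (D lo) (D hi))"
          using Lg_lg by (simp add: d0_def)
      qed simp
      have hl: "hi - lo = \<xi>1" by (simp add: hi_def lo_def field_simps)
      have Dv: "(hi - \<mu>1 i) * real (n i) = (if i \<in> Lg then \<xi>1 * real (n i) else 0)" if "i \<in> {1..L}" for i
        using that hl by (auto simp: \<mu>1_def Lg_def)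
      define Ng where "Ng = (\<Sum>i\<in>Lg. real (n i))"
      have h1: "\<alpha> * ((hi - lo) * real TFE) \<le> \<xi>1 * Ng"
      proof -
        have "\<alpha> * ((hi - lo) * real TFE) \<le> (\<Sum>i\<in>{1..L}. (hi - \<mu>1 i) * real (n i))"
          using both save_hat_le[of D L \<mu>1 T n] bm1 ss1 by (simp add: \<Psi>1_def n_def)
        also have "\<dots> = (\<Sum>i\<in>{1..L}. if i \<in> Lg then \<xi>1 * real (n i) else 0)"
          by (rule sum.cong) (simp_all add: Dv)
        also have "\<dots> = (\<Sum>i\<in>{i\<in>{1..L}. i \<in> Lg}. \<xi>1 * real (n i))"
          by (rule sum.inter_filter[symmetric]) simp
        also have "{i\<in>{1..L}. i \<in> Lg} = Lg" by (auto simp: Lg_def)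
        finally show ?thesis by (simp add: Ng_def sum_distrib_left)
      qed
      have ngl: "\<alpha> * real TFE \<le> Ng"
        using h1 hl xi_pos by (simp add: algebra_simps)
      define NL where "NL = {1..L} - Lg"
      have LgS: "Lg \<subseteq> {1..L}" by (auto simp: Lg_def)
      have split: "(\<Sum>i\<in>{1..L}. f i) = (\<Sum>i\<in>Lg. f i) + (\<Sum>i\<in>NL. f i)" for f :: "nat \<Rightarrow> real"
      proof -
        have "{1..L} = Lg \<union> NL" using LgS by (auto simp: NL_def)
        moreover have "Lg \<inter> NL = {}" by (auto simp: NL_def)
        moreover have "finite Lg" "finite NL" using LgS finite_subset by (auto simp: NL_def)
        ultimately show ?thesis by (simp add: sum.union_disjoint)
      qed
      have finLg: "finite Lg" using LgS finite_subset by auto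
      define th' where "th' = Max ((\<lambda>i. \<mu> 1 - \<mu> i) ` Lg)"
      have th'in: "th' \<in> (\<lambda>i. \<mu> 1 - \<mu> i) ` Lg" unfolding th'_def using finLg Lg_ne by (intro Max_in) auto
      have th'lt: "th' < thr" using th'in by (auto simp: Lg_def)
      have th'le: "th' \<le> \<mu> 1 - \<mu> L" using th'in DL LgS by auto
      have s1: "(\<Sum>i\<in>Lg. (\<mu> 1 - \<mu> i) * real (n i)) \<le> th' * Ng"
        unfolding Ng_def by (rule sum_le_max[OF finLg]) (use finLg in \<open>auto simp: th'_def\<close>)
      have s2: "(\<Sum>i\<in>NL. (\<mu> 1 - \<mu> i) * real (n i)) \<le> (\<mu> 1 - \<mu> L) * (\<Sum>i\<in>NL. real (n i))"
        by (rule sum_le_max) (use DL in \<open>auto simp: NL_def\<close>)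
      have s3: "(\<Sum>i\<in>NL. real (n i)) = real TFE - Ng" using sumn split[of "\<lambda>i. real (n i)"] by (simp add: Ng_def)
      have "\<alpha> * save_star D L \<mu> T TFE \<le> th' * Ng + (\<mu> 1 - \<mu> L) * (real TFE - Ng)"
        using h0 split[of "\<lambda>i. (\<mu> 1 - \<mu> i) * real (n i)"] s1 s2 s3 by simp
      then show False by (rule arith_core[OF alpha TFEp thr_def th'lt th'le ngl])
    qed
    have E0sQ: "E0Q \<in> sets (bandit_space D L \<mu>1)" unfolding E0Q_def by (rule B.F_sets[OF pred0 okQ'])
    have E1s: "E1 \<in> sets (bandit_space D L \<mu>1)" unfolding E1_def by (rule B.F_sets[OF pred1 okQ'])
    have sub: "E0Q \<subseteq> space (bandit_space D L \<mu>1) - E1" using disj by (auto simp: E0Q_def E1_def)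
    have Q0: "measure (bandit_space D L \<mu>1) E0Q \<le> \<delta>"
    proof -
      have "measure (bandit_space D L \<mu>1) E0Q \<le> measure (bandit_space D L \<mu>1) (space (bandit_space D L \<mu>1) - E1)"
        by (rule QQ.finite_measure_mono[OF sub]) (use E1s in auto)
      also have "\<dots> = 1 - measure (bandit_space D L \<mu>1) E1" by (rule QQ.prob_compl[OF E1s])
      finally show ?thesis using Q1 by simp
    qed
    have P0pos: "measure (bandit_space D L \<mu>) E0 > 0" using P0 dlt by simp
    have Q0pos: "measure (bandit_space D L \<mu>1) E0Q > 0"
      using B.posQ[OF pred0 P0pos[unfolded E0_def]] by (simp add: E0Q_def)
    have Mxge: "\<forall>i\<in>{1..L}. Dkl (D (\<mu> i)) (D (\<mu>1 i)) \<le> Mx"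
      unfolding Mx_def by (auto intro: Max_ge)
    have kl_up: "kl (measure (bandit_space D L \<mu>) E0) (measure (bandit_space D L \<mu>1) E0Q) \<le> real TFE * Mx"
      using B.core[OF pred0 Mxge, of TFE] by (simp add: E0_def E0Q_def)
    have kl_lo: "- ln (12 / 5 * \<delta>) \<le> kl (measure (bandit_space D L \<mu>) E0) (measure (bandit_space D L \<mu>1) E0Q)"
      by (rule kl_lower[OF dpos dlt P0 PP.prob_le_1 Q0pos Q0])
    have "\<beta> * ln (real T) \<le> real TFE * Mx" using kl_up kl_lo lnd by simp
    then show "real TFE \<ge> \<beta> * ln (real T) / Mx" using Mxp by (simp add: divide_le_eq)
  qed
qed



end
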